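(* Let $k$ be a field and $A_k$ a $k$-algebra with a $k$-linear involution $a\mapsto a^*$. Let $E$ be a finite-dimensional $A_k$-module with a nondegenerate $k$-bilinear form $b$ satisfying $b(ax,y)=b(x,a^*y)$ for all $a\in A_k$, $x,y\in E$, where either $b$ is alternating, or $b$ is symmetric and $\mathrm{char}(k)\neq2$. Let $E^{\mathrm{ss}}$ be the semisimplification of the $A_k$-module $E$. Then there exists a bilinear form $b'$ on $E^{\mathrm{ss}}$, symmetric if $b$ is symmetric and alternating if $b$ is alternating, such that $b'(ax,y)=b'(x,a^*y)$ for all $a\in A_k$, $x,y\in E^{\mathrm{ss}}$, and such that $b'$ is isomorphic to $b$ as a $k$-bilinear form.
   Context: The semisimplification of a finite-length module is the direct sum of the successive quotients of a Jordan–Hölder filtration; it is well-defined up to isomorphism. *)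

theory Defs
  imports Complex_Main
begin

text \<open>A k-vector space is a type of class
ab_group_add with a scalar multiplication (the whole type is the space).\<close>

definition k_algebra :: "('k::field \<Rightarrow> 'a::ring_1 \<Rightarrow> 'a) \<Rightarrow> bool" where
  "k_algebra sA \<longleftrightarrow> Vector_Spaces.vector_space sA \<and>
     (\<forall>c a b. sA c a * b = sA c (a * b) \<and> a * sA c b = sA c (a * b))"

definition k_involution :: "('k::field \<Rightarrow> 'a::ring_1 \<Rightarrow> 'a) \<Rightarrow> ('a \<Rightarrow> 'a) \<Rightarrow> bool" where
  "k_involution sA invl \<longleftrightarrow> Vector_Spaces.linear sA sA invl \<and>
     (\<forall>a. invl (invl a) = a) \<and> (\<forall>a b. invl (a * b) = invl b * invl a) \<and> invl 1 = 1"

definition alg_module ::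
  "('k::field \<Rightarrow> 'a::ring_1 \<Rightarrow> 'a) \<Rightarrow> ('k \<Rightarrow> 'e::ab_group_add \<Rightarrow> 'e) \<Rightarrow> ('a \<Rightarrow> 'e \<Rightarrow> 'e) \<Rightarrow> bool" where
  "alg_module sA sE act \<longleftrightarrow> Vector_Spaces.vector_space sE \<and>
     (\<forall>x. act 1 x = x) \<and>
     (\<forall>a b x. act (a * b) x = act a (act b x)) \<and>
     (\<forall>a b x. act (a + b) x = act a x + act b x) \<and>
     (\<forall>a x y. act a (x + y) = act a x + act a y) \<and>
     (\<forall>c a x. act (sA c a) x = sE c (act a x)) \<and>
     (\<forall>c a x. act a (sE c x) = sE c (act a x))"

definition fin_dim :: "('k::field \<Rightarrow> 'e::ab_group_add \<Rightarrow> 'e) \<Rightarrow> bool" where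
  "fin_dim sE \<longleftrightarrow> (\<exists>S. finite S \<and> module.span sE S = UNIV)"

definition bilinear_form :: "('k::field \<Rightarrow> 'e::ab_group_add \<Rightarrow> 'e) \<Rightarrow> ('e \<Rightarrow> 'e \<Rightarrow> 'k) \<Rightarrow> bool" where
  "bilinear_form sE b \<longleftrightarrow>
     (\<forall>x y z. b (x + y) z = b x z + b y z) \<and> (\<forall>c x y. b (sE c x) y = c * b x y) \<and>
     (\<forall>x y z. b x (y + z) = b x y + b x z) \<and> (\<forall>c x y. b x (sE c y) = c * b x y)"

definition nondegenerate :: "('e::ab_group_add \<Rightarrow> 'e \<Rightarrow> 'k::field) \<Rightarrow> bool" where
  "nondegenerate b \<longleftrightarrow> (\<forall>x. (\<forall>y. b x y = 0) \<longrightarrow> x = 0) \<and> (\<forall>y. (\<forall>x. b x y = 0) \<longrightarrow> y = 0)"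

definition symmetric_form :: "('e \<Rightarrow> 'e \<Rightarrow> 'k) \<Rightarrow> bool" where
  "symmetric_form b \<longleftrightarrow> (\<forall>x y. b x y = b y x)"

definition alternating_form :: "('e \<Rightarrow> 'e \<Rightarrow> 'k::zero) \<Rightarrow> bool" where
  "alternating_form b \<longleftrightarrow> (\<forall>x. b x x = 0)"

definition adjoint_compatible :: "('a \<Rightarrow> 'e \<Rightarrow> 'e) \<Rightarrow> ('a \<Rightarrow> 'a) \<Rightarrow> ('e \<Rightarrow> 'e \<Rightarrow> 'k) \<Rightarrow> bool" where
  "adjoint_compatible act invl b \<longleftrightarrow> (\<forall>a x y. b (act a x) y = b x (act (invl a) y))"

definition iso_forms ::
  "('k::field \<Rightarrow> 'f::ab_group_add \<Rightarrow> 'f) \<Rightarrow> ('f \<Rightarrow> 'f \<Rightarrow> 'k) \<Rightarrow>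
   ('k \<Rightarrow> 'e::ab_group_add \<Rightarrow> 'e) \<Rightarrow> ('e \<Rightarrow> 'e \<Rightarrow> 'k) \<Rightarrow> bool" where
  "iso_forms sF b' sE b \<longleftrightarrow>
     (\<exists>\<phi>. Vector_Spaces.linear sF sE \<phi> \<and> bij \<phi> \<and> (\<forall>x y. b' x y = b (\<phi> x) (\<phi> y)))"

definition submodule :: "('k::field \<Rightarrow> 'e::ab_group_add \<Rightarrow> 'e) \<Rightarrow> ('a \<Rightarrow> 'e \<Rightarrow> 'e) \<Rightarrow> 'e set \<Rightarrow> bool" where
  "submodule sE act M \<longleftrightarrow> module.subspace sE M \<and> (\<forall>a. \<forall>x\<in>M. act a x \<in> M)"

text \<open>For submodules N \<subseteq> M, the quotient M/N is a simple module iff N \<noteq> M and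
no submodule lies strictly between N and M (correspondence theorem).\<close>
definition simple_quotient :: "('k::field \<Rightarrow> 'e::ab_group_add \<Rightarrow> 'e) \<Rightarrow> ('a \<Rightarrow> 'e \<Rightarrow> 'e) \<Rightarrow> 'e set \<Rightarrow> 'e set \<Rightarrow> bool" where
  "simple_quotient sE act M N \<longleftrightarrow> N \<subset> M \<and>
     \<not> (\<exists>L. submodule sE act L \<and> N \<subset> L \<and> L \<subset> M)"

definition JH_filtration ::
  "('k::field \<Rightarrow> 'e::ab_group_add \<Rightarrow> 'e) \<Rightarrow> ('a \<Rightarrow> 'e \<Rightarrow> 'e) \<Rightarrow> nat \<Rightarrow> (nat \<Rightarrow> 'e set) \<Rightarrow> bool" where
  "JH_filtration sE act n Es \<longleftrightarrow> Es 0 = {0} \<and> Es n = UNIV \<and>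
     (\<forall>i\<le>n. submodule sE act (Es i)) \<and>
     (\<forall>i<n. simple_quotient sE act (Es (Suc i)) (Es i))"

text \<open>P (a submodule of F) is isomorphic, as A-module, to the quotient M/N: there is a
surjective A-linear map M \<rightarrow> P with kernel N (first isomorphism theorem).\<close>
definition iso_to_quotient ::
  "('k::field \<Rightarrow> 'e::ab_group_add \<Rightarrow> 'e) \<Rightarrow> ('a \<Rightarrow> 'e \<Rightarrow> 'e) \<Rightarrow>
   ('k \<Rightarrow> 'f::ab_group_add \<Rightarrow> 'f) \<Rightarrow> ('a \<Rightarrow> 'f \<Rightarrow> 'f) \<Rightarrow> 'f set \<Rightarrow> 'e set \<Rightarrow> 'e set \<Rightarrow> bool" where
  "iso_to_quotient sE actE sF actF P M N \<longleftrightarrow>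
     (\<exists>\<pi>. (\<forall>x\<in>M. \<forall>y\<in>M. \<pi> (x + y) = \<pi> x + \<pi> y) \<and>
          (\<forall>c. \<forall>x\<in>M. \<pi> (sE c x) = sF c (\<pi> x)) \<and>
          (\<forall>a. \<forall>x\<in>M. \<pi> (actE a x) = actF a (\<pi> x)) \<and>
          \<pi> ` M = P \<and> {x\<in>M. \<pi> x = 0} = N)"

definition internal_direct_sum ::
  "('k::field \<Rightarrow> 'f::ab_group_add \<Rightarrow> 'f) \<Rightarrow> ('a \<Rightarrow> 'f \<Rightarrow> 'f) \<Rightarrow> nat \<Rightarrow> (nat \<Rightarrow> 'f set) \<Rightarrow> bool" where
  "internal_direct_sum sF actF n Fs \<longleftrightarrow>
     (\<forall>i<n. submodule sF actF (Fs i)) \<and>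
     (\<forall>x. \<exists>xs. (\<forall>i<n. xs i \<in> Fs i) \<and> x = (\<Sum>i<n. xs i)) \<and>
     (\<forall>xs. (\<forall>i<n. xs i \<in> Fs i) \<and> (\<Sum>i<n. xs i) = 0 \<longrightarrow> (\<forall>i<n. xs i = 0))"

definition semisimplification ::
  "('k::field \<Rightarrow> 'e::ab_group_add \<Rightarrow> 'e) \<Rightarrow> ('a \<Rightarrow> 'e \<Rightarrow> 'e) \<Rightarrow>
   ('k \<Rightarrow> 'f::ab_group_add \<Rightarrow> 'f) \<Rightarrow> ('a \<Rightarrow> 'f \<Rightarrow> 'f) \<Rightarrow> bool" where
  "semisimplification sE actE sF actF \<longleftrightarrow>
     (\<exists>n Es Fs. JH_filtration sE actE n Es \<and> internal_direct_sum sF actF n Fs \<and>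
        (\<forall>i<n. iso_to_quotient sE actE sF actF (Fs i) (Es (Suc i)) (Es i)))"

end

theory Submission
  imports Defs
begin


lemma vs_field: "Vector_Spaces.vector_space ((*) :: 'k::field \<Rightarrow> 'k \<Rightarrow> 'k)"
  by unfold_locales (auto simp: algebra_simps)

locale ctx =
  fixes sE :: "'k::field \<Rightarrow> 'e::ab_group_add \<Rightarrow> 'e"
    and b :: "'e \<Rightarrow> 'e \<Rightarrow> 'k"
  assumes vsE: "Vector_Spaces.vector_space sE"
    and bil: "bilinear_form sE b"
    and eps: "alternating_form b \<or> (symmetric_form b \<and> (2::'k) \<noteq> 0)"
    and fdE: "fin_dim sE"
begin

sublocale E: vector_space sE by (rule vsE)

lemma badd1: "b (x + y) z = b x z + b y z" and badd2: "b x (y + z) = b x y + b x z"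
  and bsc1: "b (sE c x) y = c * b x y" and bsc2: "b x (sE c y) = c * b x y"
  using bil unfolding bilinear_form_def by auto

lemma bzero1[simp]: "b 0 y = 0" using bsc1[of 0 0 y] by simp
lemma bzero2[simp]: "b x 0 = 0" using bsc2[of x 0 0] by simp
lemma bneg1: "b (- x) y = - b x y" using badd1[of x "-x" y] by (simp add: eq_neg_iff_add_eq_0 add.commute)
lemma bneg2: "b x (- y) = - b x y" using badd2[of x y "-y"] by (simp add: eq_neg_iff_add_eq_0 add.commute)
lemma bdiff1: "b (x - y) z = b x z - b y z" using badd1[of x "-y" z] bneg1 by simp
lemma bdiff2: "b x (y - z) = b x y - b x z" using badd2[of x y "-z"] bneg2 by simp
lemma bsum1: "b (sum f A) y = (\<Sum>i\<in>A. b (f i) y)"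
  by (induction A rule: infinite_finite_induct) (auto simp: badd1)
lemma bsum2: "b x (sum f A) = (\<Sum>i\<in>A. b x (f i))"
  by (induction A rule: infinite_finite_induct) (auto simp: badd2)

definition "ep = (if alternating_form b then (-1::'k) else 1)"

lemma bswap: "b y x = ep * b x y"
proof (cases "alternating_form b")
  case True
  have "b (x+y) (x+y) = 0" "b x x = 0" "b y y = 0" using True unfolding alternating_form_def by auto
  then have "b x y + b y x = 0" by (simp add: badd1 badd2 add.commute)
  then have "b y x = - b x y" by (metis add.commute eq_neg_iff_add_eq_0)
  then show ?thesis using True unfolding ep_def by simp
next
  case False
  then show ?thesis using eps unfolding ep_def symmetric_form_def by auto
qed

lemma orth_sym: "b x y = 0 \<longleftrightarrow> b y x = 0"
  using bswap[of x y] bswap[of y x] by auto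

lemma ep_sq: "ep * ep = 1" unfolding ep_def by auto

lemma fin_indep: assumes "E.independent B" shows "finite B"
proof -
  obtain S where "finite S" "E.span S = UNIV" using fdE unfolding fin_dim_def by blast
  then show ?thesis using E.independent_span_bound[of S B] assms by auto
qed

lemma annihilator:
  assumes "E.subspace L" "y \<notin> L"
  shows "\<exists>f. (\<forall>x\<in>L. f x = 0) \<and> f y = 1 \<and> (\<forall>x z. f (x + z) = f x + f z) \<and> (\<forall>c x. f (sE c x) = c * f x)"
proof -
  obtain B0 where B0: "B0 \<subseteq> L" "E.independent B0" "L \<subseteq> E.span B0"
    using E.maximal_independent_subset[of L] by blast
  have sp: "E.span B0 \<subseteq> L" using B0 assms(1) E.span_minimal by blast
  have ny: "y \<notin> E.span B0" using sp assms by blast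
  have ind: "E.independent (insert y B0)" using E.independent_insertI[OF ny B0(2)] .
  interpret P: vector_space_pair sE "(*) :: 'k \<Rightarrow> 'k \<Rightarrow> 'k"
    by unfold_locales (auto simp: algebra_simps)
  obtain g where g: "Vector_Spaces.linear sE (*) g" "\<forall>x\<in>insert y B0. g x = (if x = y then 1 else 0)"
    using P.linear_independent_extend[OF ind, where f="\<lambda>x. if x = y then 1 else 0"] by blast
  have ga: "\<forall>x z. g (x + z) = g x + g z" "\<forall>c x. g (sE c x) = c * g x"
    using g(1) unfolding Vector_Spaces.linear_iff by auto
  have "\<forall>x\<in>E.span B0. g x = 0"
  proof
    fix x assume "x \<in> E.span B0"
    then show "g x = 0"
    proof (induction rule: E.span_induct_alt)
      case base then show ?case using ga(2)[rule_format, of 0 0] by simp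
    next
      case (step c x z)
      have "g x = 0" using step(1) g(2) ny B0(1) assms(2) by auto
      then show ?case using ga step by simp
    qed
  qed
  then show ?thesis using B0 g ga by (intro exI[of _ g]) auto
qed

lemma sum_delta_mult: "finite B \<Longrightarrow> w \<in> B \<Longrightarrow> (\<Sum>v\<in>B. f v * (if w = v then 1 else 0)) = (f w :: 'k)"
proof -
  assume a: "finite B" "w \<in> B"
  have "(\<Sum>v\<in>B. f v * (if w = v then 1 else 0)) = (\<Sum>v\<in>B. if w = v then f v else 0)"
    by (rule sum.cong) auto
  then show ?thesis using a by (simp add: sum.delta)
qed

lemma dual_basis:
  assumes Y: "E.subspace Y" and nd: "\<forall>x\<in>Y. (\<forall>y\<in>Y. b x y = 0) \<longrightarrow> x = 0"
    and "finite B" "B \<subseteq> Y" "E.independent B"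
  shows "\<exists>u. (\<forall>v\<in>B. u v \<in> Y) \<and> (\<forall>v\<in>B. \<forall>v'\<in>B. b v (u v') = (if v = v' then 1 else 0))"
  using assms(3-5)
proof (induction B rule: finite_induct)
  case empty thus ?case by auto
next
  case (insert v0 B)
  have indB: "E.independent B" using insert(5) E.independent_mono by blast
  have nsp: "v0 \<notin> E.span B" using insert(2,5) E.independent_insert by auto
  have v0Y: "v0 \<in> Y" and BY: "B \<subseteq> Y" using insert(4) by auto
  obtain u where u: "\<forall>v\<in>B. u v \<in> Y" "\<forall>v\<in>B. \<forall>v'\<in>B. b v (u v') = (if v = v' then 1 else 0)"
    using insert.IH indB BY by auto
  have "\<exists>z\<in>Y. (\<forall>v\<in>B. b v z = 0) \<and> b v0 z \<noteq> 0"
  proof (rule ccontr)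
    assume c: "\<not> ?thesis"
    define w where "w = v0 - (\<Sum>v\<in>B. sE (b v0 (u v)) v)"
    have wY: "w \<in> Y" unfolding w_def
      using Y v0Y BY by (intro E.subspace_diff E.subspace_sum E.subspace_scale) auto
    have "\<forall>y\<in>Y. b w y = 0"
    proof
      fix y assume yY: "y \<in> Y"
      define y' where "y' = y - (\<Sum>v\<in>B. sE (b v y) (u v))"
      have y'Y: "y' \<in> Y" unfolding y'_def
        using Y yY u(1) by (intro E.subspace_diff E.subspace_sum E.subspace_scale) auto
      have "\<forall>v''\<in>B. b v'' y' = 0"
      proof
        fix v'' assume v'': "v'' \<in> B"
        have "b v'' y' = b v'' y - (\<Sum>v\<in>B. b v y * (if v'' = v then 1 else 0))"
          unfolding y'_def using u(2) v'' by (simp add: bdiff2 bsum2 bsc2)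
        also have "\<dots> = 0" using sum_delta_mult[OF insert(1) v''] by simp
        finally show "b v'' y' = 0" .
      qed
      hence "b v0 y' = 0" using c y'Y by auto
      hence e1: "b v0 y = (\<Sum>v\<in>B. b v y * b v0 (u v))" unfolding y'_def
        by (simp add: bdiff2 bsum2 bsc2)
      have "b w y = b v0 y - (\<Sum>v\<in>B. b v0 (u v) * b v y)" unfolding w_def
        by (simp add: bdiff1 bsum1 bsc1)
      thus "b w y = 0" using e1 by (simp add: mult.commute)
    qed
    hence "w = 0" using nd wY by auto
    hence "v0 = (\<Sum>v\<in>B. sE (b v0 (u v)) v)" unfolding w_def by simp
    also have "\<dots> \<in> E.span B" by (intro E.span_sum E.span_scale E.span_base)
    finally show False using nsp by simp
  qed
  then obtain z where z: "z \<in> Y" "\<forall>v\<in>B. b v z = 0" "b v0 z \<noteq> 0" by blast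
  define z1 where "z1 = sE (1 / b v0 z) z"
  have z1: "z1 \<in> Y" "\<forall>v\<in>B. b v z1 = 0" "b v0 z1 = 1"
    unfolding z1_def using z Y by (auto simp: bsc2 E.subspace_scale)
  define u' where "u' = (\<lambda>v. if v = v0 then z1 else u v - sE (b v0 (u v)) z1)"
  show ?case
  proof (intro exI[of _ u'] conjI ballI)
    fix v assume "v \<in> insert v0 B"
    then show "u' v \<in> Y" unfolding u'_def using z1 u(1) Y
      by (auto intro!: E.subspace_diff E.subspace_scale)
  next
    fix v v' assume v: "v \<in> insert v0 B" and v': "v' \<in> insert v0 B"
    show "b v (u' v') = (if v = v' then 1 else 0)"
    proof (cases "v' = v0")
      case True
      then show ?thesis unfolding u'_def using v z1 insert(2) by auto
    next
      case False
      then have v'B: "v' \<in> B" using v' by auto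
      have "b v (u' v') = b v (u v') - b v0 (u v') * b v z1"
        unfolding u'_def using False by (simp add: bdiff2 bsc2)
      then show ?thesis using v v'B z1 u(2) insert(2) False by auto
    qed
  qed
qed

lemma iso_dual_basis:
  assumes Y: "E.subspace Y" and fin: "finite B" and BY: "B \<subseteq> Y"
    and iso: "\<forall>v\<in>B. \<forall>v'\<in>B. b v v' = 0"
    and uY: "\<forall>v\<in>B. u v \<in> Y" and ud: "\<forall>v\<in>B. \<forall>v'\<in>B. b v (u v') = (if v = v' then 1 else 0)"
  shows "\<exists>u'. (\<forall>v\<in>B. u' v \<in> Y) \<and> (\<forall>v\<in>B. \<forall>v'\<in>B. b v (u' v') = (if v = v' then 1 else 0))
     \<and> (\<forall>v\<in>B. \<forall>v'\<in>B. b (u' v) (u' v') = 0)"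
proof -
  define C where "C = (\<lambda>v v'. b (u v) (u v'))"
  have Cs: "C v' v = ep * C v v'" for v v' unfolding C_def by (rule bswap)
  have "\<exists>\<alpha>. \<forall>v\<in>B. \<forall>v'\<in>B. C v v' + ep * \<alpha> v' v + \<alpha> v v' = 0"
  proof (cases "alternating_form b")
    case True
    then have ep: "ep = -1" unfolding ep_def by simp
    obtain r :: "'e \<Rightarrow> nat" where r: "inj_on r B" using fin finite_imp_inj_to_nat_seg by blast
    define \<alpha> where "\<alpha> = (\<lambda>v v'. if r v < r v' then - C v v' else 0)"
    have "C v v' + ep * \<alpha> v' v + \<alpha> v v' = 0" if "v \<in> B" "v' \<in> B" for v v'
    proof -
      have vv: "v \<in> B" "v' \<in> B" by fact+
      consider "r v < r v'" | "r v' < r v" | "v = v'" using r vv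
        by (metis inj_on_eq_iff linorder_neqE_nat)
      then show ?thesis
      proof cases
        case 1 then show ?thesis unfolding \<alpha>_def ep by auto
      next
        case 2 then show ?thesis unfolding \<alpha>_def ep using Cs[of v' v] ep by auto
      next
        case 3
        have "C v v = 0" unfolding C_def using True alternating_form_def by metis
        then show ?thesis using 3 unfolding \<alpha>_def by auto
      qed
    qed
    then show ?thesis by blast
  next
    case False
    then have ep: "ep = 1" and two: "(2::'k) \<noteq> 0" using eps unfolding ep_def by auto
    define \<alpha> where "\<alpha> = (\<lambda>v v'. - C v v' / 2)"
    have "C v v' + ep * \<alpha> v' v + \<alpha> v v' = 0" for v v'
      unfolding \<alpha>_def ep using Cs[of v v'] ep two by (simp add: field_simps)
    then show ?thesis by blast
  qed
  then obtain \<alpha> where \<alpha>: "\<forall>v\<in>B. \<forall>v'\<in>B. C v v' + ep * \<alpha> v' v + \<alpha> v v' = 0" by blast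
  define S where "S = (\<lambda>v. \<Sum>v1\<in>B. sE (\<alpha> v v1) v1)"
  have SY: "S v \<in> Y" for v unfolding S_def using Y BY by (intro E.subspace_sum E.subspace_scale) auto
  have bBS: "b w (S v) = 0" if "w \<in> B" for w v
    unfolding S_def using iso that by (simp add: bsum2 bsc2)
  have bSy: "b (S v) y = (\<Sum>v1\<in>B. \<alpha> v v1 * b v1 y)" for v y
    unfolding S_def by (simp add: bsum1 bsc1)
  have bSS: "b (S v) (S v') = 0" for v v'
    unfolding bSy using bBS by simp
  have bSu: "b (S v) (u v') = \<alpha> v v'" if "v' \<in> B" for v v'
  proof -
    have "b (S v) (u v') = (\<Sum>v1\<in>B. \<alpha> v v1 * (if v1 = v' then 1 else 0))"
      unfolding S_def using ud that by (simp add: bsum1 bsc1)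
    also have "\<dots> = \<alpha> v v'" using sum_delta_mult[OF fin that, of "\<alpha> v"] by (simp add: eq_commute)
    finally show ?thesis .
  qed
  have buS: "b (u v) (S v') = ep * \<alpha> v' v" if "v \<in> B" for v v'
  proof -
    have "b (u v) (S v') = (\<Sum>v2\<in>B. \<alpha> v' v2 * b (u v) v2)"
      unfolding S_def by (simp add: bsum2 bsc2)
    also have "\<dots> = (\<Sum>v2\<in>B. (ep * \<alpha> v' v2) * (if v2 = v then 1 else 0))"
    proof (rule sum.cong)
      fix v2 assume v2: "v2 \<in> B"
      have "b (u v) v2 = ep * b v2 (u v)" by (rule bswap)
      then show "\<alpha> v' v2 * b (u v) v2 = (ep * \<alpha> v' v2) * (if v2 = v then 1 else 0)"
        using ud v2 that by auto
    qed simp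
    also have "\<dots> = ep * \<alpha> v' v" using sum_delta_mult[OF fin that, of "\<lambda>x. ep * \<alpha> v' x"]
      by (simp add: eq_commute)
    finally show ?thesis .
  qed
  define u' where "u' = (\<lambda>v. u v + S v)"
  show ?thesis
  proof (intro exI[of _ u'] conjI ballI)
    fix v assume "v \<in> B" then show "u' v \<in> Y" unfolding u'_def using uY SY Y E.subspace_add by blast
  next
    fix v v' assume "v \<in> B" "v' \<in> B"
    then show "b v (u' v') = (if v = v' then 1 else 0)" unfolding u'_def using ud bBS by (simp add: badd2)
  next
    fix v v' assume v: "v \<in> B" and v': "v' \<in> B"
    have "b (u' v) (u' v') = C v v' + ep * \<alpha> v' v + \<alpha> v v'"
      unfolding u'_def C_def using buS[OF v] bSu[OF v'] bSS by (simp add: badd1 badd2)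
    then show "b (u' v) (u' v') = 0" using \<alpha> v v' by simp
  qed
qed

end



definition ssum :: "'e::ab_group_add set \<Rightarrow> 'e set \<Rightarrow> 'e set" where
  "ssum A C = {x + y |x y. x \<in> A \<and> y \<in> C}"

locale ctx2 = ctx sE b
  for sE :: "'k::field \<Rightarrow> 'e::ab_group_add \<Rightarrow> 'e" and b :: "'e \<Rightarrow> 'e \<Rightarrow> 'k" +
  fixes sF :: "'k \<Rightarrow> 'f::ab_group_add \<Rightarrow> 'f" and actF :: "'a \<Rightarrow> 'f \<Rightarrow> 'f"
    and invl :: "'a \<Rightarrow> 'a" and Fs :: "nat \<Rightarrow> 'f set"
  assumes invl2: "\<And>a. invl (invl a) = a"
begin

definition rsub :: "'e set \<Rightarrow> ('a \<Rightarrow> 'e \<Rightarrow> 'e) \<Rightarrow> 'e set \<Rightarrow> bool" where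
  "rsub Y act M \<longleftrightarrow> M \<subseteq> Y \<and> E.subspace M \<and> (\<forall>a. \<forall>x\<in>M. act a x \<in> M)"

definition good :: "'e set \<Rightarrow> ('a \<Rightarrow> 'e \<Rightarrow> 'e) \<Rightarrow> nat \<Rightarrow> (nat \<Rightarrow> 'e set) \<Rightarrow> nat set
    \<Rightarrow> (nat \<Rightarrow> nat) \<Rightarrow> (nat \<Rightarrow> 'e \<Rightarrow> 'f) \<Rightarrow> bool" where
  "good Y act m G I \<sigma> \<pi> \<longleftrightarrow>
  E.subspace Y \<and> (\<forall>a. \<forall>y\<in>Y. act a y \<in> Y) \<and>
  (\<forall>a. \<forall>x\<in>Y. \<forall>y\<in>Y. act a (x + y) = act a x + act a y) \<and>
  (\<forall>a. \<forall>x\<in>Y. \<forall>y\<in>Y. b (act a x) y = b x (act (invl a) y)) \<and>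
  (\<forall>x\<in>Y. (\<forall>y\<in>Y. b x y = 0) \<longrightarrow> x = 0) \<and>
  G 0 = {0} \<and> G m = Y \<and> (\<forall>i\<le>m. rsub Y act (G i)) \<and> (\<forall>i<m. G i \<subseteq> G (Suc i)) \<and>
  (\<forall>i<m. G (Suc i) \<noteq> G i \<longrightarrow> \<not> (\<exists>L. rsub Y act L \<and> G i \<subset> L \<and> L \<subset> G (Suc i))) \<and>
  I = {i. i < m \<and> G (Suc i) \<noteq> G i} \<and> inj_on \<sigma> I \<and>
  (\<forall>i\<in>I. (\<forall>x\<in>G (Suc i). \<forall>y\<in>G (Suc i). \<pi> i (x + y) = \<pi> i x + \<pi> i y) \<and>
         (\<forall>c. \<forall>x\<in>G (Suc i). \<pi> i (sE c x) = sF c (\<pi> i x)) \<and>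
         (\<forall>a. \<forall>x\<in>G (Suc i). \<pi> i (act a x) = actF a (\<pi> i x)) \<and>
         \<pi> i ` G (Suc i) = Fs (\<sigma> i) \<and> {x\<in>G (Suc i). \<pi> i x = 0} = G i)"

definition concl :: "'e set \<Rightarrow> nat set \<Rightarrow> (nat \<Rightarrow> 'f \<Rightarrow> 'e) \<Rightarrow> bool" where
  "concl Y T \<psi> \<longleftrightarrow>
  (\<forall>t\<in>T. \<forall>x\<in>Fs t. \<psi> t x \<in> Y) \<and>
  (\<forall>t\<in>T. \<forall>x\<in>Fs t. \<forall>y\<in>Fs t. \<psi> t (x + y) = \<psi> t x + \<psi> t y) \<and>
  (\<forall>t\<in>T. \<forall>c. \<forall>x\<in>Fs t. \<psi> t (sF c x) = sE c (\<psi> t x)) \<and>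
  (\<forall>y\<in>Y. \<exists>xs. (\<forall>t\<in>T. xs t \<in> Fs t) \<and> y = (\<Sum>t\<in>T. \<psi> t (xs t))) \<and>
  (\<forall>xs. (\<forall>t\<in>T. xs t \<in> Fs t) \<and> (\<Sum>t\<in>T. \<psi> t (xs t)) = 0 \<longrightarrow> (\<forall>t\<in>T. xs t = 0)) \<and>
  (\<forall>s\<in>T. \<forall>t\<in>T. \<forall>a. \<forall>x\<in>Fs s. \<forall>y\<in>Fs t.
      b (\<psi> s (actF a x)) (\<psi> t y) = b (\<psi> s x) (\<psi> t (actF (invl a) y)))"


lemma conclD1: assumes "concl Y T \<psi>" shows "\<forall>t\<in>T. \<forall>x\<in>Fs t. \<psi> t x \<in> Y"
  using assms[unfolded concl_def, THEN conjunct1] .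
lemma conclD2: assumes "concl Y T \<psi>" shows "\<forall>t\<in>T. \<forall>x\<in>Fs t. \<forall>y\<in>Fs t. \<psi> t (x + y) = \<psi> t x + \<psi> t y"
  using assms[unfolded concl_def, THEN conjunct2, THEN conjunct1] .
lemma conclD3: assumes "concl Y T \<psi>" shows "\<forall>t\<in>T. \<forall>c. \<forall>x\<in>Fs t. \<psi> t (sF c x) = sE c (\<psi> t x)"
  using assms[unfolded concl_def, THEN conjunct2, THEN conjunct2, THEN conjunct1] .
lemma conclD4: assumes "concl Y T \<psi>" shows "\<forall>y\<in>Y. \<exists>xs. (\<forall>t\<in>T. xs t \<in> Fs t) \<and> y = (\<Sum>t\<in>T. \<psi> t (xs t))"
  using assms[unfolded concl_def, THEN conjunct2, THEN conjunct2, THEN conjunct2, THEN conjunct1] .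
lemma conclD5: assumes "concl Y T \<psi>" shows "\<forall>xs. (\<forall>t\<in>T. xs t \<in> Fs t) \<and> (\<Sum>t\<in>T. \<psi> t (xs t)) = 0 \<longrightarrow> (\<forall>t\<in>T. xs t = 0)"
  using assms[unfolded concl_def, THEN conjunct2, THEN conjunct2, THEN conjunct2, THEN conjunct2, THEN conjunct1] .
lemma conclD6: assumes "concl Y T \<psi>" shows "\<forall>s\<in>T. \<forall>t\<in>T. \<forall>a. \<forall>x\<in>Fs s. \<forall>y\<in>Fs t.
      b (\<psi> s (actF a x)) (\<psi> t y) = b (\<psi> s x) (\<psi> t (actF (invl a) y))"
  using assms[unfolded concl_def, THEN conjunct2, THEN conjunct2, THEN conjunct2, THEN conjunct2, THEN conjunct2] .

lemma rsub_ssum: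
  assumes "E.subspace Y" "\<forall>a. \<forall>x\<in>Y. \<forall>y\<in>Y. act a (x + y) = act a x + act a y"
    "rsub Y act A" "rsub Y act C"
  shows "rsub Y act (ssum A C)"
  unfolding rsub_def
proof (intro conjI allI ballI)
  have A: "A \<subseteq> Y" "E.subspace A" "\<forall>a. \<forall>x\<in>A. act a x \<in> A"
    and C: "C \<subseteq> Y" "E.subspace C" "\<forall>a. \<forall>x\<in>C. act a x \<in> C"
    using assms(3,4) unfolding rsub_def by auto
  show "ssum A C \<subseteq> Y" unfolding ssum_def using A C assms(1) E.subspace_add by blast
  show "E.subspace (ssum A C)" unfolding ssum_def using A C E.subspace_sums by blast
  fix a x assume "x \<in> ssum A C"
  then obtain y z where yz: "x = y + z" "y \<in> A" "z \<in> C" unfolding ssum_def by blast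
  then have "act a x = act a y + act a z" using assms(2) A C by blast
  then show "act a x \<in> ssum A C" unfolding ssum_def using yz A C by blast
qed

lemma rsub_inter: "rsub Y act A \<Longrightarrow> rsub Y act C \<Longrightarrow> rsub Y act (A \<inter> C)"
  unfolding rsub_def using E.subspace_inter by blast

lemma addf_diff: fixes f :: "'e \<Rightarrow> 'k"
  shows "(\<And>x z. f (x + z) = f x + f z) \<Longrightarrow> f (x - z) = f x - f z"
proof -
  assume h: "\<And>x z. f (x + z) = f x + f z"
  have "f x = f ((x - z) + z)" by simp
  then show ?thesis using h[of "x - z" z] by simp
qed

lemma addf_sum: fixes f :: "'e \<Rightarrow> 'k" and g :: "'i \<Rightarrow> 'e"
  shows "(\<And>x z. f (x + z) = f x + f z) \<Longrightarrow> f (sum g A) = (\<Sum>i\<in>A. f (g i))"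
proof (induction A rule: infinite_finite_induct)
  case (infinite A) then show ?case using addf_diff[of f 0 0] by simp
next
  case empty then show ?case using addf_diff[of f 0 0] by simp
next
  case (insert x F) then show ?case by simp
qed

lemma glue:
  assumes cA: "concl A T0 \<psi>a" and cR: "concl R T1 \<psi>r" and disj: "T0 \<inter> T1 = {}"
    and fin: "finite T0" "finite T1" and dec: "ssum A R = Y" and int: "A \<inter> R = {0}"
    and orth: "\<forall>x\<in>A. \<forall>y\<in>R. b x y = 0" and Asub: "E.subspace A" and Rsub: "E.subspace R"
    and Fact: "\<forall>t\<in>T0 \<union> T1. \<forall>a. \<forall>x\<in>Fs t. actF a x \<in> Fs t"
  shows "concl Y (T0 \<union> T1) (\<lambda>t. if t \<in> T0 then \<psi>a t else \<psi>r t)"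
proof -
  let ?\<psi> = "\<lambda>t. if t \<in> T0 then \<psi>a t else \<psi>r t"
  note A1 = conclD1[OF cA] and A2 = conclD2[OF cA] and A3 = conclD3[OF cA] and A4 = conclD4[OF cA]
    and A5 = conclD5[OF cA] and A6 = conclD6[OF cA]
  note R1 = conclD1[OF cR] and R2 = conclD2[OF cR] and R3 = conclD3[OF cR] and R4 = conclD4[OF cR]
    and R5 = conclD5[OF cR] and R6 = conclD6[OF cR]
  have AY: "A \<subseteq> Y"
  proof
    fix x assume "x \<in> A" then have "x + 0 \<in> ssum A R" using ssum_def E.subspace_0[OF Rsub] by blast
    then show "x \<in> Y" using dec by simp
  qed
  have RY: "R \<subseteq> Y"
  proof
    fix x assume "x \<in> R" then have "0 + x \<in> ssum A R" using ssum_def E.subspace_0[OF Asub] by blast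
    then show "x \<in> Y" using dec by simp
  qed
  have orth2: "\<forall>x\<in>A. \<forall>y\<in>R. b y x = 0" using orth orth_sym by blast
  have sumsplit: "(\<Sum>t\<in>T0 \<union> T1. ?\<psi> t (xs t)) = (\<Sum>t\<in>T0. \<psi>a t (xs t)) + (\<Sum>t\<in>T1. \<psi>r t (xs t))" for xs
  proof -
    have "(\<Sum>t\<in>T0 \<union> T1. ?\<psi> t (xs t)) = (\<Sum>t\<in>T0. ?\<psi> t (xs t)) + (\<Sum>t\<in>T1. ?\<psi> t (xs t))"
      using sum.union_disjoint[OF fin disj] by blast
    moreover have "(\<Sum>t\<in>T0. ?\<psi> t (xs t)) = (\<Sum>t\<in>T0. \<psi>a t (xs t))" by (rule sum.cong) auto
    moreover have "(\<Sum>t\<in>T1. ?\<psi> t (xs t)) = (\<Sum>t\<in>T1. \<psi>r t (xs t))" using disj by (intro sum.cong) auto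
    ultimately show ?thesis by simp
  qed
  show ?thesis unfolding concl_def
  proof (intro conjI ballI allI impI)
    fix t x assume t: "t \<in> T0 \<union> T1" and x: "x \<in> Fs t"
    show "?\<psi> t x \<in> Y"
    proof (cases "t \<in> T0")
      case True then have "\<psi>a t x \<in> A" using A1 x by blast
      then show ?thesis using True AY by auto
    next
      case False then have "\<psi>r t x \<in> R" using R1 x t by blast
      then show ?thesis using False RY by auto
    qed
  next
    fix t x y assume t: "t \<in> T0 \<union> T1" and x: "x \<in> Fs t" and y: "y \<in> Fs t"
    show "?\<psi> t (x + y) = ?\<psi> t x + ?\<psi> t y"
    proof (cases "t \<in> T0")
      case True then show ?thesis using A2 x y by simp
    next
      case False then have "t \<in> T1" using t by blast
      then show ?thesis using False R2 x y by simp
    qed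
  next
    fix t c x assume t: "t \<in> T0 \<union> T1" and x: "x \<in> Fs t"
    show "?\<psi> t (sF c x) = sE c (?\<psi> t x)"
    proof (cases "t \<in> T0")
      case True then show ?thesis using A3 x by simp
    next
      case False then have "t \<in> T1" using t by blast
      then show ?thesis using False R3 x by simp
    qed
  next
    fix y assume "y \<in> Y"
    then obtain a r where ar: "y = a + r" "a \<in> A" "r \<in> R" using dec unfolding ssum_def by blast
    obtain xa where xa: "\<forall>t\<in>T0. xa t \<in> Fs t" "a = (\<Sum>t\<in>T0. \<psi>a t (xa t))" using A4 ar(2) by blast
    obtain xr where xr: "\<forall>t\<in>T1. xr t \<in> Fs t" "r = (\<Sum>t\<in>T1. \<psi>r t (xr t))" using R4 ar(3) by blast
    define xs where "xs = (\<lambda>t. if t \<in> T0 then xa t else xr t)"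
    have "(\<Sum>t\<in>T0. \<psi>a t (xs t)) = (\<Sum>t\<in>T0. \<psi>a t (xa t))" unfolding xs_def by (rule sum.cong) auto
    moreover have "(\<Sum>t\<in>T1. \<psi>r t (xs t)) = (\<Sum>t\<in>T1. \<psi>r t (xr t))" unfolding xs_def using disj
      by (intro sum.cong) auto
    ultimately have "y = (\<Sum>t\<in>T0 \<union> T1. ?\<psi> t (xs t))" using sumsplit[of xs] ar(1) xa(2) xr(2) by simp
    moreover have "\<forall>t\<in>T0 \<union> T1. xs t \<in> Fs t" unfolding xs_def using xa(1) xr(1) by auto
    ultimately show "\<exists>xs. (\<forall>t\<in>T0 \<union> T1. xs t \<in> Fs t) \<and> y = (\<Sum>t\<in>T0 \<union> T1. ?\<psi> t (xs t))" by blast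
  next
    fix xs t assume h: "(\<forall>t\<in>T0 \<union> T1. xs t \<in> Fs t) \<and> (\<Sum>t\<in>T0 \<union> T1. ?\<psi> t (xs t)) = 0" and t: "t \<in> T0 \<union> T1"
    define a where "a = (\<Sum>t\<in>T0. \<psi>a t (xs t))"
    define r where "r = (\<Sum>t\<in>T1. \<psi>r t (xs t))"
    have h1: "\<forall>t\<in>T0. xs t \<in> Fs t" "\<forall>t\<in>T1. xs t \<in> Fs t" using h by auto
    have aA: "a \<in> A" unfolding a_def using A1 h1(1) by (intro E.subspace_sum[OF Asub]) blast
    have rR: "r \<in> R" unfolding r_def using R1 h1(2) by (intro E.subspace_sum[OF Rsub]) blast
    have ar0: "a + r = 0" using h sumsplit[of xs] unfolding a_def r_def by simp
    then have "a = - r" by (simp add: eq_neg_iff_add_eq_0)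
    then have "a \<in> R" using rR E.subspace_neg[OF Rsub] by simp
    then have a0: "a = 0" using aA int by blast
    then have r0: "r = 0" using ar0 by simp
    have "\<forall>t\<in>T0. xs t = 0" using A5 h1(1) a0 unfolding a_def by blast
    moreover have "\<forall>t\<in>T1. xs t = 0" using R5 h1(2) r0 unfolding r_def by blast
    ultimately show "xs t = 0" using t by blast
  next
    fix s t a x y assume s: "s \<in> T0 \<union> T1" and t: "t \<in> T0 \<union> T1" and x: "x \<in> Fs s" and y: "y \<in> Fs t"
    have ax: "actF a x \<in> Fs s" using Fact s x by blast
    have ay: "actF (invl a) y \<in> Fs t" using Fact t y by blast
    show "b (?\<psi> s (actF a x)) (?\<psi> t y) = b (?\<psi> s x) (?\<psi> t (actF (invl a) y))"
    proof (cases "s \<in> T0")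
      case sT: True
      show ?thesis
      proof (cases "t \<in> T0")
        case True
        have "b (\<psi>a s (actF a x)) (\<psi>a t y) = b (\<psi>a s x) (\<psi>a t (actF (invl a) y))"
          using A6 sT True x y by blast
        then show ?thesis using sT True by simp
      next
        case False then have tT: "t \<in> T1" using t by blast
        have m: "\<psi>a s (actF a x) \<in> A" "\<psi>a s x \<in> A" "\<psi>r t y \<in> R" "\<psi>r t (actF (invl a) y) \<in> R"
          using A1 R1 sT tT x y ax ay by blast+
        then have "b (\<psi>a s (actF a x)) (\<psi>r t y) = 0" "b (\<psi>a s x) (\<psi>r t (actF (invl a) y)) = 0"
          using orth by blast+
        then show ?thesis using sT False by simp
      qed
    next
      case sF: False
      then have sT1: "s \<in> T1" using s by blast
      show ?thesis
      proof (cases "t \<in> T0")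
        case True
        have m: "\<psi>r s (actF a x) \<in> R" "\<psi>r s x \<in> R" "\<psi>a t y \<in> A" "\<psi>a t (actF (invl a) y) \<in> A"
          using A1 R1 sT1 True x y ax ay by blast+
        then have "b (\<psi>r s (actF a x)) (\<psi>a t y) = 0" "b (\<psi>r s x) (\<psi>a t (actF (invl a) y)) = 0"
          using orth2 by blast+
        then show ?thesis using sF True by simp
      next
        case False then have tT: "t \<in> T1" using t by blast
        have "b (\<psi>r s (actF a x)) (\<psi>r t y) = b (\<psi>r s x) (\<psi>r t (actF (invl a) y))"
          using R6 sT1 tT x y by blast
        then show ?thesis using sF False by simp
      qed
    qed
  qed
qed

end

locale stepctx = ctx2 sE b sF actF invl Fs
  for sE :: "'k::field \<Rightarrow> 'e::ab_group_add \<Rightarrow> 'e" and b :: "'e \<Rightarrow> 'e \<Rightarrow> 'k"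
    and sF :: "'k \<Rightarrow> 'f::ab_group_add \<Rightarrow> 'f" and actF :: "'a \<Rightarrow> 'f \<Rightarrow> 'f"
    and invl :: "'a \<Rightarrow> 'a" and Fs :: "nat \<Rightarrow> 'f set" +
  fixes Y :: "'e set" and act :: "'a \<Rightarrow> 'e \<Rightarrow> 'e" and m :: nat and G :: "nat \<Rightarrow> 'e set"
    and I :: "nat set" and \<sigma> :: "nat \<Rightarrow> nat" and \<pi> :: "nat \<Rightarrow> 'e \<Rightarrow> 'f" and i0 :: nat
  assumes good: "good Y act m G I \<sigma> \<pi>" and Ine: "I \<noteq> {}" and i0: "i0 = Min I"
begin

lemma goodc: "E.subspace Y \<and> (\<forall>a. \<forall>y\<in>Y. act a y \<in> Y) \<and>
  (\<forall>a. \<forall>x\<in>Y. \<forall>y\<in>Y. act a (x + y) = act a x + act a y) \<and>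
  (\<forall>a. \<forall>x\<in>Y. \<forall>y\<in>Y. b (act a x) y = b x (act (invl a) y)) \<and>
  (\<forall>x\<in>Y. (\<forall>y\<in>Y. b x y = 0) \<longrightarrow> x = 0) \<and>
  G 0 = {0} \<and> G m = Y \<and> (\<forall>i\<le>m. rsub Y act (G i)) \<and> (\<forall>i<m. G i \<subseteq> G (Suc i)) \<and>
  (\<forall>i<m. G (Suc i) \<noteq> G i \<longrightarrow> \<not> (\<exists>L. rsub Y act L \<and> G i \<subset> L \<and> L \<subset> G (Suc i))) \<and>
  I = {i. i < m \<and> G (Suc i) \<noteq> G i} \<and> inj_on \<sigma> I \<and>
  (\<forall>i\<in>I. (\<forall>x\<in>G (Suc i). \<forall>y\<in>G (Suc i). \<pi> i (x + y) = \<pi> i x + \<pi> i y) \<and>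
         (\<forall>c. \<forall>x\<in>G (Suc i). \<pi> i (sE c x) = sF c (\<pi> i x)) \<and>
         (\<forall>a. \<forall>x\<in>G (Suc i). \<pi> i (act a x) = actF a (\<pi> i x)) \<and>
         \<pi> i ` G (Suc i) = Fs (\<sigma> i) \<and> {x\<in>G (Suc i). \<pi> i x = 0} = G i)"
  using good unfolding good_def .

lemma Ysub: "E.subspace Y" using goodc[THEN conjunct1] .
lemma actY: "y \<in> Y \<Longrightarrow> act a y \<in> Y" using goodc[THEN conjunct2, THEN conjunct1] by blast
lemma actadd: "x \<in> Y \<Longrightarrow> y \<in> Y \<Longrightarrow> act a (x + y) = act a x + act a y" using goodc[THEN conjunct2, THEN conjunct2, THEN conjunct1] by blast
lemma compat: "x \<in> Y \<Longrightarrow> y \<in> Y \<Longrightarrow> b (act a x) y = b x (act (invl a) y)" using goodc[THEN conjunct2, THEN conjunct2, THEN conjunct2, THEN conjunct1] by blast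
lemma nd: "x \<in> Y \<Longrightarrow> (\<And>y. y \<in> Y \<Longrightarrow> b x y = 0) \<Longrightarrow> x = 0" using goodc[THEN conjunct2, THEN conjunct2, THEN conjunct2, THEN conjunct2, THEN conjunct1] by blast
lemma G0: "G 0 = {0}" using goodc[THEN conjunct2, THEN conjunct2, THEN conjunct2, THEN conjunct2, THEN conjunct2, THEN conjunct1] .
lemma Gm: "G m = Y" using goodc[THEN conjunct2, THEN conjunct2, THEN conjunct2, THEN conjunct2, THEN conjunct2, THEN conjunct2, THEN conjunct1] .
lemma Grsub: "i \<le> m \<Longrightarrow> rsub Y act (G i)" using goodc[THEN conjunct2, THEN conjunct2, THEN conjunct2, THEN conjunct2, THEN conjunct2, THEN conjunct2, THEN conjunct2, THEN conjunct1] by blast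
lemma Gstep: "i < m \<Longrightarrow> G i \<subseteq> G (Suc i)" using goodc[THEN conjunct2, THEN conjunct2, THEN conjunct2, THEN conjunct2, THEN conjunct2, THEN conjunct2, THEN conjunct2, THEN conjunct2, THEN conjunct1] by blast
lemma Gsimple: "i < m \<Longrightarrow> G (Suc i) \<noteq> G i \<Longrightarrow> rsub Y act L \<Longrightarrow> G i \<subset> L \<Longrightarrow> L \<subset> G (Suc i) \<Longrightarrow> False"
  using goodc[THEN conjunct2, THEN conjunct2, THEN conjunct2, THEN conjunct2, THEN conjunct2, THEN conjunct2, THEN conjunct2, THEN conjunct2, THEN conjunct2, THEN conjunct1] by blast
lemma Idef: "I = {i. i < m \<and> G (Suc i) \<noteq> G i}" using goodc[THEN conjunct2, THEN conjunct2, THEN conjunct2, THEN conjunct2, THEN conjunct2, THEN conjunct2, THEN conjunct2, THEN conjunct2, THEN conjunct2, THEN conjunct2, THEN conjunct1] .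
lemma sinj: "inj_on \<sigma> I" using goodc[THEN conjunct2, THEN conjunct2, THEN conjunct2, THEN conjunct2, THEN conjunct2, THEN conjunct2, THEN conjunct2, THEN conjunct2, THEN conjunct2, THEN conjunct2, THEN conjunct2, THEN conjunct1] .
lemma \<pi>all: "i \<in> I \<Longrightarrow> (\<forall>x\<in>G (Suc i). \<forall>y\<in>G (Suc i). \<pi> i (x + y) = \<pi> i x + \<pi> i y) \<and>
         (\<forall>c. \<forall>x\<in>G (Suc i). \<pi> i (sE c x) = sF c (\<pi> i x)) \<and>
         (\<forall>a. \<forall>x\<in>G (Suc i). \<pi> i (act a x) = actF a (\<pi> i x)) \<and>
         \<pi> i ` G (Suc i) = Fs (\<sigma> i) \<and> {x\<in>G (Suc i). \<pi> i x = 0} = G i"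
  using goodc[THEN conjunct2, THEN conjunct2, THEN conjunct2, THEN conjunct2, THEN conjunct2, THEN conjunct2, THEN conjunct2, THEN conjunct2, THEN conjunct2, THEN conjunct2, THEN conjunct2, THEN conjunct2] by blast
lemma \<pi>add: "i \<in> I \<Longrightarrow> x \<in> G (Suc i) \<Longrightarrow> y \<in> G (Suc i) \<Longrightarrow> \<pi> i (x + y) = \<pi> i x + \<pi> i y"
  using \<pi>all by blast
lemma \<pi>sc: "i \<in> I \<Longrightarrow> x \<in> G (Suc i) \<Longrightarrow> \<pi> i (sE c x) = sF c (\<pi> i x)" using \<pi>all by blast
lemma \<pi>act: "i \<in> I \<Longrightarrow> x \<in> G (Suc i) \<Longrightarrow> \<pi> i (act a x) = actF a (\<pi> i x)" using \<pi>all by blast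
lemma \<pi>img: "i \<in> I \<Longrightarrow> \<pi> i ` G (Suc i) = Fs (\<sigma> i)" using \<pi>all by blast
lemma \<pi>ker: "i \<in> I \<Longrightarrow> {x\<in>G (Suc i). \<pi> i x = 0} = G i" using \<pi>all by blast

lemma Gsub: "i \<le> m \<Longrightarrow> E.subspace (G i)" and GY: "i \<le> m \<Longrightarrow> G i \<subseteq> Y"
  and Gact: "i \<le> m \<Longrightarrow> x \<in> G i \<Longrightarrow> act a x \<in> G i"
  using Grsub unfolding rsub_def by blast+

lemma act0: "act a 0 = 0"
  using actadd[of 0 0 a] E.subspace_0[OF Ysub] by simp

lemma Gmono: "i \<le> i' \<Longrightarrow> i' \<le> m \<Longrightarrow> G i \<subseteq> G i'"
proof (induction i' rule: dec_induct)
  case base then show ?case by simp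
next
  case (step n) then show ?case using Gstep[of n] by auto
qed

lemma finI: "finite I" and Im: "I \<subseteq> {..<m}" using Idef by auto

lemma i0I: "i0 \<in> I" using i0 finI Ine Min_in by blast
lemma i0min: "i \<in> I \<Longrightarrow> i0 \<le> i" using i0 finI by simp
lemma i0m: "i0 < m" using i0I Im by auto

lemma Gpre: "i \<le> i0 \<Longrightarrow> G i = {0}"
proof (induction i)
  case 0 then show ?case using G0 by simp
next
  case (Suc i)
  have "i \<notin> I" using i0min[of i] Suc(2) by auto
  then have "G (Suc i) = G i" using Idef Suc(2) i0m by auto
  then show ?case using Suc by simp
qed

definition "W = G (Suc i0)"

lemma Wrsub: "rsub Y act W" unfolding W_def using Grsub i0m by simp
lemma Wsub: "E.subspace W" and WY: "W \<subseteq> Y" and Wact: "x \<in> W \<Longrightarrow> act a x \<in> W"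
  using Wrsub unfolding rsub_def by blast+
lemma Wne: "W \<noteq> {0}" using i0I Idef Gpre[of i0] unfolding W_def by auto
lemma Wsimple: "rsub Y act M \<Longrightarrow> M \<subseteq> W \<Longrightarrow> M = {0} \<or> M = W"
proof (rule ccontr)
  assume M: "rsub Y act M" "M \<subseteq> W" and c: "\<not> (M = {0} \<or> M = W)"
  have "0 \<in> M" using M(1) E.subspace_0 unfolding rsub_def by blast
  then have "G i0 \<subset> M" "M \<subset> G (Suc i0)" using c M(2) Gpre[of i0] unfolding W_def by auto
  moreover have "G (Suc i0) \<noteq> G i0" using i0I Idef by auto
  ultimately show False using Gsimple[OF i0m _ M(1)] by blast
qed

definition "B = (SOME B. B \<subseteq> W \<and> E.independent B \<and> W \<subseteq> E.span B)"

lemma B: "B \<subseteq> W" "E.independent B" "W \<subseteq> E.span B"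
proof -
  obtain B0 where "B0 \<subseteq> W" "E.independent B0" "W \<subseteq> E.span B0"
    by (rule E.maximal_independent_subset[of W])
  then have "\<exists>B. B \<subseteq> W \<and> E.independent B \<and> W \<subseteq> E.span B" by blast
  then have h: "B \<subseteq> W \<and> E.independent B \<and> W \<subseteq> E.span B" unfolding B_def by (rule someI_ex)
  then show "B \<subseteq> W" "E.independent B" "W \<subseteq> E.span B" by auto
qed

lemma finB: "finite B" using fin_indep B(2) .
lemma BY: "B \<subseteq> Y" using B(1) WY by blast
lemma spanBW: "E.span B \<subseteq> W" using B(1) Wsub E.span_minimal by blast

definition "u = (SOME u. (\<forall>v\<in>B. u v \<in> Y) \<and> (\<forall>v\<in>B. \<forall>v'\<in>B. b v (u v') = (if v = v' then 1 else 0)))"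

lemma u: "\<forall>v\<in>B. u v \<in> Y" "\<forall>v\<in>B. \<forall>v'\<in>B. b v (u v') = (if v = v' then 1 else 0)"
proof -
  have "\<exists>u. (\<forall>v\<in>B. u v \<in> Y) \<and> (\<forall>v\<in>B. \<forall>v'\<in>B. b v (u v') = (if v = v' then 1 else 0))"
    using dual_basis[OF Ysub _ finB BY B(2)] nd by blast
  then have h: "(\<forall>v\<in>B. u v \<in> Y) \<and> (\<forall>v\<in>B. \<forall>v'\<in>B. b v (u v') = (if v = v' then 1 else 0))"
    unfolding u_def by (rule someI_ex)
  then show "\<forall>v\<in>B. u v \<in> Y" "\<forall>v\<in>B. \<forall>v'\<in>B. b v (u v') = (if v = v' then 1 else 0)" by auto
qed

definition "K = {y\<in>Y. \<forall>w\<in>W. b w y = 0}"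

lemma KY: "K \<subseteq> Y" unfolding K_def by blast

lemma spanB_orth: "w \<in> E.span B \<Longrightarrow> \<forall>v\<in>B. b v y = 0 \<Longrightarrow> b w y = 0"
proof (induction rule: E.span_induct_alt)
  case base then show ?case by simp
next
  case (step c x z) then show ?case by (simp add: badd1 bsc1)
qed

lemma Kchar: "y \<in> Y \<Longrightarrow> y \<in> K \<longleftrightarrow> (\<forall>v\<in>B. b v y = 0)"
  unfolding K_def using B(1,3) spanB_orth by blast

lemma Ksub: "E.subspace K"
  unfolding E.subspace_def K_def
  using Ysub E.subspace_0 E.subspace_add E.subspace_scale by (auto simp: badd2 bsc2)

lemma Kact: "y \<in> K \<Longrightarrow> act a y \<in> K"
proof -
  assume y: "y \<in> K"
  have "b w (act a y) = 0" if "w \<in> W" for w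
  proof -
    have "b (act (invl a) w) y = b w (act (invl (invl a)) y)" using compat that WY y KY by blast
    moreover have "act (invl a) w \<in> W" using Wact that .
    ultimately show ?thesis using y unfolding K_def by (simp add: invl2)
  qed
  then show ?thesis using y actY unfolding K_def by blast
qed

lemma Krsub: "rsub Y act K" unfolding rsub_def using KY Ksub Kact by blast

lemma Kne: "K \<noteq> Y"
proof
  assume KY: "K = Y"
  obtain w where w: "w \<in> W" "w \<noteq> 0" using Wne Wsub E.subspace_0 by blast
  have "w = 0" using nd[of w] w WY KY unfolding K_def by blast
  then show False using w by simp
qed

lemma orthKW: "k \<in> K \<Longrightarrow> w \<in> W \<Longrightarrow> b k w = 0"
  unfolding K_def using orth_sym by blast

lemma resid_K: "y \<in> Y \<Longrightarrow> y - (\<Sum>v\<in>B. sE (b v y) (u v)) \<in> K"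
proof -
  assume y: "y \<in> Y"
  have inY: "y - (\<Sum>v\<in>B. sE (b v y) (u v)) \<in> Y"
    using Ysub y u(1) by (intro E.subspace_diff E.subspace_sum E.subspace_scale) auto
  have "b v' (y - (\<Sum>v\<in>B. sE (b v y) (u v))) = 0" if v': "v' \<in> B" for v'
  proof -
    have "b v' (y - (\<Sum>v\<in>B. sE (b v y) (u v))) = b v' y - (\<Sum>v\<in>B. b v y * (if v' = v then 1 else 0))"
      using u(2) v' by (simp add: bdiff2 bsum2 bsc2)
    also have "\<dots> = 0" using sum_delta_mult[OF finB v'] by simp
    finally show ?thesis .
  qed
  then show ?thesis using Kchar inY by blast
qed

lemma NoMid: assumes L: "rsub Y act L" "K \<subseteq> L" "L \<noteq> K" shows "L = Y"
proof -
  have LY: "L \<subseteq> Y" and Lsub: "E.subspace L" and Lact: "\<And>a x. x \<in> L \<Longrightarrow> act a x \<in> L"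
    using L(1) unfolding rsub_def by blast+
  define WL where "WL = {w\<in>W. \<forall>l\<in>L. b w l = 0}"
  have WLsub: "E.subspace WL" unfolding WL_def E.subspace_def
    using Wsub E.subspace_0 E.subspace_add E.subspace_scale by (auto simp: badd1 bsc1)
  have WLact: "act a w \<in> WL" if "w \<in> WL" for a w
  proof -
    have "b (act a w) l = 0" if "l \<in> L" for l
      using compat[of w l a] \<open>w \<in> WL\<close> that LY WY Lact unfolding WL_def by auto
    then show ?thesis using Wact \<open>w \<in> WL\<close> unfolding WL_def by blast
  qed
  have WLrsub: "rsub Y act WL" unfolding rsub_def using WLsub WLact WY unfolding WL_def by blast
  obtain l where l: "l \<in> L" "l \<notin> K" using L(2,3) by blast
  then obtain w where w: "w \<in> W" "b w l \<noteq> 0" using LY unfolding K_def by blast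
  have "WL \<noteq> W" using w l unfolding WL_def by blast
  then have WL0: "WL = {0}" using Wsimple[OF WLrsub] unfolding WL_def by blast
  show "L = Y"
  proof (rule ccontr)
    assume "L \<noteq> Y"
    then obtain y where y: "y \<in> Y" "y \<notin> L" using LY by blast
    obtain f where f: "\<forall>x\<in>L. f x = 0" "f y = 1" "\<forall>x z. f (x + z) = f x + f z" "\<forall>c x. f (sE c x) = c * f x"
      using annihilator[OF Lsub y(2)] by blast
    have fadd: "\<And>x z. f (x + z) = f x + f z" using f(3) by blast
    have fexp: "f x = (\<Sum>v\<in>B. b v x * f (u v))" if "x \<in> Y" for x
    proof -
      have "f (x - (\<Sum>v\<in>B. sE (b v x) (u v))) = 0" using resid_K[OF that] L(2) f(1) by blast
      then have "f x = f (\<Sum>v\<in>B. sE (b v x) (u v))" using addf_diff[OF fadd] by simp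
      also have "\<dots> = (\<Sum>v\<in>B. f (sE (b v x) (u v)))" by (rule addf_sum[OF fadd])
      also have "\<dots> = (\<Sum>v\<in>B. b v x * f (u v))" using f(4) by simp
      finally show ?thesis .
    qed
    define w0 where "w0 = (\<Sum>v\<in>B. sE (f (u v)) v)"
    have w0W: "w0 \<in> W" unfolding w0_def using Wsub B(1)
      by (intro E.subspace_sum E.subspace_scale) auto
    have "b w0 l' = 0" if "l' \<in> L" for l'
    proof -
      have "b w0 l' = (\<Sum>v\<in>B. f (u v) * b v l')" unfolding w0_def by (simp add: bsum1 bsc1)
      also have "\<dots> = f l'" using fexp[of l'] that LY by (auto simp: mult.commute)
      finally show ?thesis using f(1) that by simp
    qed
    then have "w0 \<in> WL" using w0W unfolding WL_def by blast
    then have "w0 = 0" using WL0 by blast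
    then have "\<forall>v\<in>B. f (u v) = 0" unfolding w0_def
      using E.independentD[OF B(2) finB order_refl, where u="\<lambda>v. f (u v)"] by blast
    then have "f y = 0" using fexp[OF y(1)] by simp
    then show False using f(2) by simp
  qed
qed


definition "L i = ssum (G i) K"

lemma ssum_mem: "x \<in> A \<Longrightarrow> y \<in> C \<Longrightarrow> x + y \<in> ssum A C" unfolding ssum_def by blast

lemma Lrsub: "i \<le> m \<Longrightarrow> rsub Y act (L i)"
  unfolding L_def using rsub_ssum[OF Ysub _ Grsub Krsub] actadd by blast

lemma KL: "i \<le> m \<Longrightarrow> K \<subseteq> L i"
proof
  fix k assume "i \<le> m" "k \<in> K"
  then have "0 + k \<in> L i" unfolding L_def using ssum_mem E.subspace_0[OF Gsub] by blast
  then show "k \<in> L i" by simp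
qed

lemma GL: "i \<le> m \<Longrightarrow> G i \<subseteq> L i"
proof
  fix g assume "i \<le> m" "g \<in> G i"
  then have "g + 0 \<in> L i" unfolding L_def using ssum_mem E.subspace_0[OF Ksub] by blast
  then show "g \<in> L i" by simp
qed

lemma Lcases: "i \<le> m \<Longrightarrow> L i = K \<or> L i = Y"
  using NoMid[OF Lrsub KL] by blast

lemma L0: "L 0 = K"
  unfolding L_def ssum_def G0 by auto

lemma LY: "i \<le> m \<Longrightarrow> L i \<subseteq> Y" using Lrsub unfolding rsub_def by blast

lemma Lm: "L m = Y" using GL[of m] Gm LY[of m] by auto

lemma Lmono: "i \<le> i' \<Longrightarrow> i' \<le> m \<Longrightarrow> L i \<subseteq> L i'"
  unfolding L_def ssum_def using Gmono by blast

definition "j = (LEAST i. i < m \<and> L (Suc i) = Y)"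

lemma jprops: "j < m" "L (Suc j) = Y" "\<And>i. i < j \<Longrightarrow> L (Suc i) \<noteq> Y"
proof -
  have ex: "m - 1 < m \<and> L (Suc (m - 1)) = Y" using i0m Lm by (simp add: Suc_pred')
  show "j < m" "L (Suc j) = Y" using LeastI[of "\<lambda>i. i < m \<and> L (Suc i) = Y", OF ex] unfolding j_def by blast+
  fix i assume "i < j"
  then have "\<not> (i < m \<and> L (Suc i) = Y)" unfolding j_def by (rule not_less_Least)
  then show "L (Suc i) \<noteq> Y" using \<open>i < j\<close> \<open>j < m\<close> by auto
qed

lemma Lbelow: "i \<le> j \<Longrightarrow> L i = K"
proof (cases i)
  case 0 then show ?thesis using L0 by simp
next
  case (Suc i')
  assume "i \<le> j"
  then have "i' < j" using Suc by simp
  then show ?thesis using jprops Lcases[of "Suc i'"] Suc by auto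
qed

lemma Labove: "j < i \<Longrightarrow> i \<le> m \<Longrightarrow> L i = Y"
  using Lmono[of "Suc j" i] jprops(2) LY[of i] by auto

lemma Lstable: "i < m \<Longrightarrow> i \<noteq> j \<Longrightarrow> L (Suc i) = L i"
proof -
  assume i: "i < m" "i \<noteq> j"
  show ?thesis
  proof (cases "i < j")
    case True then show ?thesis using Lbelow[of i] Lbelow[of "Suc i"] by simp
  next
    case False then show ?thesis using i Labove[of i] Labove[of "Suc i"] by simp
  qed
qed

lemma jI: "j \<in> I"
proof -
  have "L (Suc j) \<noteq> L j" using jprops(2) Lbelow[of j] Kne by simp
  then have "G (Suc j) \<noteq> G j" unfolding L_def by auto
  then show ?thesis using Idef jprops(1) by simp
qed

definition "Mi i = ssum (G i) (G (Suc i) \<inter> K)"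

lemma Mi_props: assumes "i < m"
  shows "rsub Y act (Mi i)" "G i \<subseteq> Mi i" "Mi i \<subseteq> G (Suc i)" "Mi i \<subseteq> L i"
proof -
  have r1: "rsub Y act (G (Suc i) \<inter> K)" using rsub_inter[OF Grsub Krsub] assms by simp
  show "rsub Y act (Mi i)" unfolding Mi_def using rsub_ssum[OF Ysub _ Grsub r1] actadd assms by simp
  show "G i \<subseteq> Mi i"
  proof
    fix g assume "g \<in> G i"
    then have "g + 0 \<in> Mi i" unfolding Mi_def using ssum_mem E.subspace_0[OF Gsub] E.subspace_0[OF Ksub] assms
      by (metis IntI Suc_leI)
    then show "g \<in> Mi i" by simp
  qed
  show "Mi i \<subseteq> G (Suc i)" unfolding Mi_def ssum_def
    using Gstep[OF assms] E.subspace_add[OF Gsub[of "Suc i"]] assms by auto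
  show "Mi i \<subseteq> L i" unfolding Mi_def L_def ssum_def by blast
qed

lemma Mi_cases: assumes "i \<in> I" shows "Mi i = G i \<or> Mi i = G (Suc i)"
proof (rule ccontr)
  assume c: "\<not> (Mi i = G i \<or> Mi i = G (Suc i))"
  have i: "i < m" "G (Suc i) \<noteq> G i" using assms Idef by auto
  show False using Gsimple[OF i Mi_props(1)[OF i(1)]] Mi_props[OF i(1)] c by blast
qed

lemma noncollapse: assumes "i \<in> I" "i \<noteq> j" shows "G (Suc i) = ssum (G i) (G (Suc i) \<inter> K)"
proof -
  have i: "i < m" "G (Suc i) \<noteq> G i" using assms Idef by auto
  have "Mi i \<noteq> G i"
  proof
    assume M: "Mi i = G i"
    have "G (Suc i) \<subseteq> G i"
    proof
      fix x assume x: "x \<in> G (Suc i)"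
      then have "x \<in> L i" using GL[of "Suc i"] Lstable[OF i(1) assms(2)] i by auto
      then obtain g k where gk: "x = g + k" "g \<in> G i" "k \<in> K" unfolding L_def ssum_def by blast
      have "k = x - g" using gk by simp
      moreover have "x - g \<in> G (Suc i)" using x gk(2) Gstep[OF i(1)] E.subspace_diff[OF Gsub[of "Suc i"]] i(1)
        by (meson Suc_leI subsetD)
      ultimately have "k \<in> G (Suc i)" by simp
      then have "0 + k \<in> Mi i" unfolding Mi_def using ssum_mem E.subspace_0[OF Gsub] gk i
        by (metis IntI less_imp_le)
      then have "k \<in> G i" using M by simp
      then show "x \<in> G i" using gk E.subspace_add[OF Gsub] i by auto
    qed
    then show False using Gstep[OF i(1)] i(2) by blast
  qed
  then show ?thesis using Mi_cases[OF assms(1)] unfolding Mi_def by simp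
qed

lemma GjK: "G j \<subseteq> K" using GL[of j] Lbelow[of j] jprops(1) by auto

lemma collapse: "G (Suc j) \<inter> K \<subseteq> G j"
proof -
  have "Mi j \<noteq> G (Suc j)"
  proof
    assume M: "Mi j = G (Suc j)"
    then have "G (Suc j) \<subseteq> K" using Mi_props(4)[OF jprops(1)] Lbelow[of j] by auto
    then have "L (Suc j) \<subseteq> K" unfolding L_def ssum_def using E.subspace_add[OF Ksub] by blast
    then show False using jprops(2) Kne KY by blast
  qed
  then have "Mi j = G j" using Mi_cases[OF jI] by blast
  moreover have "G (Suc j) \<inter> K \<subseteq> Mi j"
  proof
    fix x assume "x \<in> G (Suc j) \<inter> K"
    then have "0 + x \<in> Mi j" unfolding Mi_def using ssum_mem E.subspace_0[OF Gsub] jprops(1)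
      by (metis less_imp_le)
    then show "x \<in> Mi j" by simp
  qed
  ultimately show ?thesis by simp
qed

lemma LSj: "ssum (G (Suc j)) K = Y" using jprops(2) unfolding L_def .


lemma WG: "Suc i0 \<le> i \<Longrightarrow> i \<le> m \<Longrightarrow> W \<subseteq> G i" unfolding W_def using Gmono by blast

lemma Irest_gt: "i \<in> I - {i0, j} \<Longrightarrow> Suc i0 \<le> i" using i0min by force

context
  fixes Y' :: "'e set" and act' :: "'a \<Rightarrow> 'e \<Rightarrow> 'e"
  assumes Y'sub: "E.subspace Y'" and Y'K: "Y' \<subseteq> K" and KWY: "K \<subseteq> ssum W Y'"
    and WY'0: "W \<inter> Y' = {0}"
    and act'Y: "\<And>a y. y \<in> Y' \<Longrightarrow> act' a y \<in> Y'"
    and act'W: "\<And>a y. y \<in> Y' \<Longrightarrow> act a y - act' a y \<in> W"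
    and act'add: "\<And>a x y. x \<in> Y' \<Longrightarrow> y \<in> Y' \<Longrightarrow> act' a (x + y) = act' a x + act' a y"
    and compat': "\<And>a x y. x \<in> Y' \<Longrightarrow> y \<in> Y' \<Longrightarrow> b (act' a x) y = b x (act' (invl a) y)"
    and nd': "\<And>x. x \<in> Y' \<Longrightarrow> \<forall>y\<in>Y'. b x y = 0 \<Longrightarrow> x = 0"
begin

lemma Y'Y: "Y' \<subseteq> Y" using Y'K KY by blast

lemma act'0: "act' a 0 = 0"
  using act'add[of 0 0 a] E.subspace_0[OF Y'sub] by simp

lemma act'_eq: "y \<in> Y' \<Longrightarrow> \<exists>w\<in>W. act' a y = act a y - w"
  using act'W[of y a] by (intro bexI[of _ "act a y - act' a y"]) auto

lemma H_rsub: assumes "i \<le> m" shows "rsub Y' act' (G i \<inter> Y')"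
  unfolding rsub_def
proof (intro conjI allI ballI)
  show "G i \<inter> Y' \<subseteq> Y'" by blast
  show "E.subspace (G i \<inter> Y')" using E.subspace_inter Gsub[OF assms] Y'sub by blast
  fix a x assume x: "x \<in> G i \<inter> Y'"
  show "act' a x \<in> G i \<inter> Y'"
  proof (cases "i \<le> i0")
    case True
    then have "x = 0" using Gpre x by auto
    then show ?thesis using act'0 x by simp
  next
    case False
    then have WGi: "W \<subseteq> G i" using WG assms by simp
    obtain w where w: "w \<in> W" "act' a x = act a x - w" using act'_eq x by blast
    have "act a x \<in> G i" using Gact assms x by blast
    then have "act' a x \<in> G i" using w WGi E.subspace_diff[OF Gsub[OF assms]] by auto
    then show ?thesis using act'Y x by blast
  qed
qed

lemma G_split: assumes i: "i \<in> I - {i0, j}" shows "G (Suc i) = ssum (G i) (G (Suc i) \<inter> Y')"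
proof
  have im: "i < m" using i Idef by auto
  have WGi: "W \<subseteq> G i" using WG Irest_gt[OF i] im by simp
  show "G (Suc i) \<subseteq> ssum (G i) (G (Suc i) \<inter> Y')"
  proof
    fix x assume x: "x \<in> G (Suc i)"
    then obtain g k where gk: "x = g + k" "g \<in> G i" "k \<in> G (Suc i) \<inter> K"
      using noncollapse[of i] i unfolding ssum_def by blast
    then obtain w y' where wy: "k = w + y'" "w \<in> W" "y' \<in> Y'" using KWY unfolding ssum_def by blast
    have "y' = k - w" using wy by simp
    moreover have "k - w \<in> G (Suc i)"
    proof -
      have GSsub: "E.subspace (G (Suc i))" using Gsub im by simp
      have kS: "k \<in> G (Suc i)" using gk by blast
      have wS: "w \<in> G (Suc i)" using wy WGi Gstep[OF im] by blast
      show ?thesis using E.subspace_diff[OF GSsub kS wS] .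
    qed
    ultimately have y'G: "y' \<in> G (Suc i) \<inter> Y'" using wy by simp
    have "x = (g + w) + y'" using gk wy by (simp add: add.assoc)
    moreover have "g + w \<in> G i" using gk wy WGi E.subspace_add[OF Gsub[of i]] im by auto
    ultimately show "x \<in> ssum (G i) (G (Suc i) \<inter> Y')" using y'G ssum_mem by blast
  qed
  show "ssum (G i) (G (Suc i) \<inter> Y') \<subseteq> G (Suc i)" unfolding ssum_def
    using Gstep[OF im] E.subspace_add[OF Gsub[of "Suc i"]] im by auto
qed

lemma H_nontriv: assumes "i < m" shows "G (Suc i) \<inter> Y' \<noteq> G i \<inter> Y' \<longleftrightarrow> i \<in> I - {i0, j}"
proof
  assume ne: "G (Suc i) \<inter> Y' \<noteq> G i \<inter> Y'"
  have "i \<in> I"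
  proof (rule ccontr)
    assume "i \<notin> I" then have "G (Suc i) = G i" using Idef assms by auto
    then show False using ne by simp
  qed
  moreover have "i \<noteq> i0"
  proof
    assume "i = i0"
    then have "G (Suc i) \<inter> Y' = {0}" "G i \<inter> Y' = {0}"
      using WY'0 Gpre[of i0] E.subspace_0[OF Y'sub] unfolding W_def by auto
    then show False using ne by simp
  qed
  moreover have "i \<noteq> j"
  proof
    assume "i = j"
    then have "G (Suc i) \<inter> Y' \<subseteq> G i \<inter> Y'" using collapse Y'K by blast
    moreover have "G i \<inter> Y' \<subseteq> G (Suc i) \<inter> Y'" using Gstep[OF assms] by blast
    ultimately show False using ne by blast
  qed
  ultimately show "i \<in> I - {i0, j}" by blast
next
  assume i: "i \<in> I - {i0, j}"
  show "G (Suc i) \<inter> Y' \<noteq> G i \<inter> Y'"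
  proof
    assume eq: "G (Suc i) \<inter> Y' = G i \<inter> Y'"
    have "G (Suc i) \<subseteq> G i"
    proof
      fix x assume "x \<in> G (Suc i)"
      then obtain g y where "x = g + y" "g \<in> G i" "y \<in> G i \<inter> Y'"
        using G_split[OF i] eq unfolding ssum_def by blast
      then show "x \<in> G i" using E.subspace_add[OF Gsub[of i]] assms by auto
    qed
    then show False using i Idef Gstep[OF assms] by auto
  qed
qed

lemma H_simple: assumes i: "i < m" "G (Suc i) \<inter> Y' \<noteq> G i \<inter> Y'"
    and Lr: "rsub Y' act' L'" and L1: "G i \<inter> Y' \<subset> L'" and L2: "L' \<subset> G (Suc i) \<inter> Y'"
  shows False
proof -
  have iI: "i \<in> I - {i0, j}" using H_nontriv[OF i(1)] i(2) by blast
  have WGi: "W \<subseteq> G i" using WG Irest_gt[OF iI] i by simp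
  have L'Y: "L' \<subseteq> Y'" and L'sub: "E.subspace L'" and L'act: "\<And>a x. x \<in> L' \<Longrightarrow> act' a x \<in> L'"
    using Lr unfolding rsub_def by blast+
  define M where "M = ssum (G i) L'"
  have L'rsubY: "rsub Y act (ssum W L')"
  proof -
    have "ssum W L' \<subseteq> Y" unfolding ssum_def using WY L'Y Y'Y E.subspace_add[OF Ysub] by blast
    moreover have "E.subspace (ssum W L')" unfolding ssum_def using E.subspace_sums[OF Wsub L'sub] .
    moreover have "act a x \<in> ssum W L'" if xin: "x \<in> ssum W L'" for a x
    proof -
      obtain w l where wl: "x = w + l" "w \<in> W" "l \<in> L'" using xin unfolding ssum_def by blast
      have "act a x = act a w + act a l" using wl actadd WY L'Y Y'Y by blast
      also have "\<dots> = (act a w + (act a l - act' a l)) + act' a l" by simp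
      finally have "act a x = (act a w + (act a l - act' a l)) + act' a l" .
      moreover have "act a w + (act a l - act' a l) \<in> W"
        using Wact wl act'W[of l a] L'Y E.subspace_add[OF Wsub] by blast
      ultimately show ?thesis using L'act wl ssum_mem by metis
    qed
    ultimately show ?thesis unfolding rsub_def by blast
  qed
  have "ssum (G i) L' = ssum (G i) (ssum W L')"
  proof
    show "ssum (G i) L' \<subseteq> ssum (G i) (ssum W L')"
      unfolding ssum_def using E.subspace_0[OF Wsub] by force
    show "ssum (G i) (ssum W L') \<subseteq> ssum (G i) L'"
    proof
      fix x assume "x \<in> ssum (G i) (ssum W L')"
      then obtain g w l where "x = g + (w + l)" "g \<in> G i" "w \<in> W" "l \<in> L'" unfolding ssum_def by blast
      moreover then have "g + w \<in> G i" using WGi E.subspace_add[OF Gsub[of i]] i by auto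
      ultimately show "x \<in> ssum (G i) L'" using ssum_mem by (metis add.assoc)
    qed
  qed
  then have Mr: "rsub Y act M" unfolding M_def using rsub_ssum[OF Ysub _ Grsub L'rsubY] actadd i by simp
  have GM: "G i \<subseteq> M" unfolding M_def ssum_def using E.subspace_0[OF L'sub] by force
  have MG: "M \<subseteq> G (Suc i)" unfolding M_def ssum_def
    using L2 Gstep[OF i(1)] E.subspace_add[OF Gsub[of "Suc i"]] i by auto
  have "M \<noteq> G i"
  proof
    assume "M = G i"
    obtain l where l: "l \<in> L'" "l \<notin> G i \<inter> Y'" using L1 by blast
    have "0 + l \<in> M" unfolding M_def using ssum_mem l E.subspace_0[OF Gsub] i by (metis less_imp_le)
    then show False using \<open>M = G i\<close> l L'Y by auto
  qed
  moreover have "M \<noteq> G (Suc i)"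
  proof
    assume MS: "M = G (Suc i)"
    obtain y where y: "y \<in> G (Suc i) \<inter> Y'" "y \<notin> L'" using L2 by blast
    then obtain g l where gl: "y = g + l" "g \<in> G i" "l \<in> L'" using MS unfolding M_def ssum_def by blast
    have "g = y - l" using gl by simp
    moreover have "y - l \<in> Y'" using y gl L'Y E.subspace_diff[OF Y'sub] by blast
    ultimately have "g \<in> Y'" by simp
    then have "g \<in> L'" using gl L1 by blast
    then have "y \<in> L'" using gl E.subspace_add[OF L'sub] by simp
    then show False using y by simp
  qed
  moreover have "G (Suc i) \<noteq> G i" using iI Idef by auto
  ultimately show False using Gsimple[OF i(1) _ Mr] GM MG by blast
qed

lemma reduction: "good Y' act' m (\<lambda>i. G i \<inter> Y') (I - {i0, j}) \<sigma> \<pi>"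
  unfolding good_def
proof (intro conjI allI ballI impI)
  show "E.subspace Y'" by (rule Y'sub)
  show "\<And>a y. y \<in> Y' \<Longrightarrow> act' a y \<in> Y'" by (rule act'Y)
  show "\<And>a x y. x \<in> Y' \<Longrightarrow> y \<in> Y' \<Longrightarrow> act' a (x + y) = act' a x + act' a y" by (rule act'add)
  show "\<And>a x y. x \<in> Y' \<Longrightarrow> y \<in> Y' \<Longrightarrow> b (act' a x) y = b x (act' (invl a) y)" by (rule compat')
  show "\<And>x. x \<in> Y' \<Longrightarrow> \<forall>y\<in>Y'. b x y = 0 \<Longrightarrow> x = 0" by (rule nd')
  show "G 0 \<inter> Y' = {0}" using G0 E.subspace_0[OF Y'sub] by auto
  show "G m \<inter> Y' = Y'" using Gm Y'Y by auto
  show "\<And>i. i \<le> m \<Longrightarrow> rsub Y' act' (G i \<inter> Y')" by (rule H_rsub)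
  show "\<And>i. i < m \<Longrightarrow> G i \<inter> Y' \<subseteq> G (Suc i) \<inter> Y'" using Gstep by blast
  show "\<And>i. i < m \<Longrightarrow> G (Suc i) \<inter> Y' \<noteq> G i \<inter> Y' \<Longrightarrow>
      \<not> (\<exists>L. rsub Y' act' L \<and> G i \<inter> Y' \<subset> L \<and> L \<subset> G (Suc i) \<inter> Y')"
    using H_simple by blast
  show "I - {i0, j} = {i. i < m \<and> G (Suc i) \<inter> Y' \<noteq> G i \<inter> Y'}"
    using H_nontriv Im by blast
  show "inj_on \<sigma> (I - {i0, j})" using sinj by (rule inj_on_subset) blast
  fix i assume iI: "i \<in> I - {i0, j}"
  have i: "i \<in> I" "i < m" using iI Im by auto
  have WGi: "W \<subseteq> G i" using WG Irest_gt[OF iI] i by simp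
  show "\<And>x y. x \<in> G (Suc i) \<inter> Y' \<Longrightarrow> y \<in> G (Suc i) \<inter> Y' \<Longrightarrow> \<pi> i (x + y) = \<pi> i x + \<pi> i y"
    using \<pi>add[OF i(1)] by blast
  show "\<And>c x. x \<in> G (Suc i) \<inter> Y' \<Longrightarrow> \<pi> i (sE c x) = sF c (\<pi> i x)" using \<pi>sc[OF i(1)] by blast
  show "\<And>a x. x \<in> G (Suc i) \<inter> Y' \<Longrightarrow> \<pi> i (act' a x) = actF a (\<pi> i x)"
  proof -
    fix a x assume x: "x \<in> G (Suc i) \<inter> Y'"
    obtain w where w: "w \<in> W" "act' a x = act a x - w" using act'_eq x by blast
    have ax: "act a x \<in> G (Suc i)" using Gact x i by auto
    have wG: "w \<in> G i" "w \<in> G (Suc i)" using w WGi Gstep[OF i(2)] by auto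
    have "act' a x \<in> G (Suc i)" using w ax wG E.subspace_diff[OF Gsub[of "Suc i"]] i by auto
    moreover have "act a x = act' a x + w" using w by simp
    ultimately have "\<pi> i (act a x) = \<pi> i (act' a x) + \<pi> i w" using \<pi>add[OF i(1)] wG by simp
    moreover have "\<pi> i w = 0" using \<pi>ker[OF i(1)] wG by blast
    ultimately show "\<pi> i (act' a x) = actF a (\<pi> i x)" using \<pi>act[OF i(1)] x by simp
  qed
  show "\<pi> i ` (G (Suc i) \<inter> Y') = Fs (\<sigma> i)"
  proof
    show "\<pi> i ` (G (Suc i) \<inter> Y') \<subseteq> Fs (\<sigma> i)" using \<pi>img[OF i(1)] by blast
    show "Fs (\<sigma> i) \<subseteq> \<pi> i ` (G (Suc i) \<inter> Y')"
    proof
      fix z assume "z \<in> Fs (\<sigma> i)"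
      then obtain x where x: "x \<in> G (Suc i)" "z = \<pi> i x" using \<pi>img[OF i(1)] by blast
      then obtain g y where gy: "x = g + y" "g \<in> G i" "y \<in> G (Suc i) \<inter> Y'"
        using G_split[OF iI] unfolding ssum_def by blast
      have gS: "g \<in> G (Suc i)" using gy Gstep[OF i(2)] by auto
      have "\<pi> i x = \<pi> i g + \<pi> i y" using \<pi>add[OF i(1) gS] gy by blast
      moreover have "\<pi> i g = 0" using \<pi>ker[OF i(1)] gy gS by blast
      ultimately show "z \<in> \<pi> i ` (G (Suc i) \<inter> Y')" using x gy by simp
    qed
  qed
  show "{x \<in> G (Suc i) \<inter> Y'. \<pi> i x = 0} = G i \<inter> Y'"
    using \<pi>ker[OF i(1)] Gstep[OF i(2)] by blast
qed

end


lemma Fsact: "i \<in> I \<Longrightarrow> x \<in> Fs (\<sigma> i) \<Longrightarrow> actF a x \<in> Fs (\<sigma> i)"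
proof -
  assume i: "i \<in> I" and x: "x \<in> Fs (\<sigma> i)"
  have "x \<in> \<pi> i ` G (Suc i)" using \<pi>img[OF i] x by simp
  then obtain g where g: "g \<in> G (Suc i)" "x = \<pi> i g" by (rule imageE) simp
  have im: "Suc i \<le> m" using i Im by auto
  have "act a g \<in> G (Suc i)" using Gact[OF im g(1)] .
  moreover have "\<pi> i (act a g) = actF a x" using \<pi>act[OF i g(1)] g(2) by simp
  ultimately have "actF a x \<in> \<pi> i ` G (Suc i)" by (metis imageI)
  then show ?thesis using \<pi>img[OF i] by simp
qed

lemma \<pi>0: "i \<in> I \<Longrightarrow> \<pi> i 0 = 0"
proof -
  assume i: "i \<in> I"
  have im: "Suc i \<le> m" using i Im by auto
  have "0 \<in> G (Suc i)" using E.subspace_0[OF Gsub[OF im]] .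
  then show ?thesis using \<pi>add[OF i, of 0 0] by simp
qed

lemma \<pi>diff: "i \<in> I \<Longrightarrow> x \<in> G (Suc i) \<Longrightarrow> y \<in> G (Suc i) \<Longrightarrow> \<pi> i (x - y) = \<pi> i x - \<pi> i y"
proof -
  assume i: "i \<in> I" and xy: "x \<in> G (Suc i)" "y \<in> G (Suc i)"
  have im: "Suc i \<le> m" using i Im by auto
  have "x - y \<in> G (Suc i)" using E.subspace_diff[OF Gsub[OF im] xy] .
  then have "\<pi> i x = \<pi> i (x - y) + \<pi> i y" using \<pi>add[OF i, of "x - y" y] xy by simp
  then show ?thesis by simp
qed

lemma \<pi>0inj: "w1 \<in> W \<Longrightarrow> w2 \<in> W \<Longrightarrow> \<pi> i0 w1 = \<pi> i0 w2 \<Longrightarrow> w1 = w2"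
proof -
  assume w: "w1 \<in> W" "w2 \<in> W" "\<pi> i0 w1 = \<pi> i0 w2"
  have "\<pi> i0 (w1 - w2) = 0" using \<pi>diff[OF i0I] w unfolding W_def by simp
  moreover have "w1 - w2 \<in> W" using E.subspace_diff[OF Wsub] w by blast
  ultimately have "w1 - w2 \<in> G i0" using \<pi>ker[OF i0I] unfolding W_def by blast
  then show ?thesis using Gpre[of i0] by simp
qed

lemma \<pi>W: "w \<in> W \<Longrightarrow> \<pi> i0 w \<in> Fs (\<sigma> i0)"
proof -
  assume "w \<in> W"
  then have "\<pi> i0 w \<in> \<pi> i0 ` G (Suc i0)" unfolding W_def by (rule imageI)
  then show ?thesis using \<pi>img[OF i0I] by simp
qed

definition "\<psi>0 x = (THE w. w \<in> W \<and> \<pi> i0 w = x)"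

lemma \<psi>0: "x \<in> Fs (\<sigma> i0) \<Longrightarrow> \<psi>0 x \<in> W \<and> \<pi> i0 (\<psi>0 x) = x"
proof -
  assume "x \<in> Fs (\<sigma> i0)"
  then have "x \<in> \<pi> i0 ` W" using \<pi>img[OF i0I] unfolding W_def by simp
  then obtain w where w: "w \<in> W" "x = \<pi> i0 w" by (rule imageE) simp
  have "\<exists>!w. w \<in> W \<and> \<pi> i0 w = x"
  proof (rule ex1I[of _ w])
    show "w \<in> W \<and> \<pi> i0 w = x" using w by simp
    fix w' assume "w' \<in> W \<and> \<pi> i0 w' = x"
    then show "w' = w" using \<pi>0inj[of w' w] w by simp
  qed
  then show ?thesis unfolding \<psi>0_def by (rule theI')
qed

lemma \<psi>0_inv: "w \<in> W \<Longrightarrow> \<psi>0 (\<pi> i0 w) = w"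
proof -
  assume w: "w \<in> W"
  have h: "\<psi>0 (\<pi> i0 w) \<in> W \<and> \<pi> i0 (\<psi>0 (\<pi> i0 w)) = \<pi> i0 w" using \<psi>0[OF \<pi>W[OF w]] .
  then show ?thesis using \<pi>0inj[of "\<psi>0 (\<pi> i0 w)" w] w by simp
qed

lemma \<psi>0_act: "x \<in> Fs (\<sigma> i0) \<Longrightarrow> \<psi>0 (actF a x) = act a (\<psi>0 x)"
proof -
  assume x: "x \<in> Fs (\<sigma> i0)"
  have w: "\<psi>0 x \<in> W" "\<pi> i0 (\<psi>0 x) = x" using \<psi>0[OF x] by auto
  have "\<pi> i0 (act a (\<psi>0 x)) = actF a x" using \<pi>act[OF i0I] w unfolding W_def by simp
  then show ?thesis using \<psi>0_inv[OF Wact[OF w(1)], of a] by simp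
qed

lemma concl0: "concl W {\<sigma> i0} (\<lambda>t. \<psi>0)"
  unfolding concl_def
proof (intro conjI ballI allI impI)
  fix t x assume "x \<in> Fs t" "t \<in> {\<sigma> i0}" then show "\<psi>0 x \<in> W" using \<psi>0 by auto
next
  fix t x y assume "t \<in> {\<sigma> i0}" "x \<in> Fs t" "y \<in> Fs t"
  then have x: "x \<in> Fs (\<sigma> i0)" and y: "y \<in> Fs (\<sigma> i0)" by auto
  have s: "\<psi>0 x + \<psi>0 y \<in> W" using \<psi>0[OF x] \<psi>0[OF y] E.subspace_add[OF Wsub] by blast
  have "\<pi> i0 (\<psi>0 x + \<psi>0 y) = x + y" using \<pi>add[OF i0I] \<psi>0[OF x] \<psi>0[OF y] unfolding W_def by simp
  then show "\<psi>0 (x + y) = \<psi>0 x + \<psi>0 y" using \<psi>0_inv[OF s] by simp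
next
  fix t c x assume "t \<in> {\<sigma> i0}" "x \<in> Fs t"
  then have x: "x \<in> Fs (\<sigma> i0)" by auto
  have s: "sE c (\<psi>0 x) \<in> W" using \<psi>0[OF x] E.subspace_scale[OF Wsub] by blast
  have "\<pi> i0 (sE c (\<psi>0 x)) = sF c x" using \<pi>sc[OF i0I] \<psi>0[OF x] unfolding W_def by simp
  then show "\<psi>0 (sF c x) = sE c (\<psi>0 x)" using \<psi>0_inv[OF s] by simp
next
  fix y assume y: "y \<in> W"
  show "\<exists>xs. (\<forall>t\<in>{\<sigma> i0}. xs t \<in> Fs t) \<and> y = (\<Sum>t\<in>{\<sigma> i0}. \<psi>0 (xs t))"
    using \<pi>W[OF y] \<psi>0_inv[OF y] by (intro exI[of _ "\<lambda>t. \<pi> i0 y"]) auto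
next
  fix xs t assume h: "(\<forall>t\<in>{\<sigma> i0}. xs t \<in> Fs t) \<and> (\<Sum>t\<in>{\<sigma> i0}. \<psi>0 (xs t)) = 0" and t: "t \<in> {\<sigma> i0}"
  then have x: "xs (\<sigma> i0) \<in> Fs (\<sigma> i0)" and z: "\<psi>0 (xs (\<sigma> i0)) = 0" by auto
  have "xs (\<sigma> i0) = \<pi> i0 0" using \<psi>0[OF x] z by simp
  then show "xs t = 0" using t \<pi>0[OF i0I] by simp
next
  fix s t a x y assume "s \<in> {\<sigma> i0}" "t \<in> {\<sigma> i0}" "x \<in> Fs s" "y \<in> Fs t"
  then have x: "x \<in> Fs (\<sigma> i0)" and y: "y \<in> Fs (\<sigma> i0)" by auto
  have "b (act a (\<psi>0 x)) (\<psi>0 y) = b (\<psi>0 x) (act (invl a) (\<psi>0 y))"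
    using compat \<psi>0[OF x] \<psi>0[OF y] WY by blast
  then show "b (\<psi>0 (actF a x)) (\<psi>0 y) = b (\<psi>0 x) (\<psi>0 (actF (invl a) y))"
    using \<psi>0_act[OF x] \<psi>0_act[OF y] by simp
qed

lemma sigma_split: "\<sigma> ` I = \<sigma> ` {i0, j} \<union> \<sigma> ` (I - {i0, j})" using i0I jI by blast

lemma sigma_disj: "\<sigma> ` {i0, j} \<inter> \<sigma> ` (I - {i0, j}) = {}"
  using sinj i0I jI unfolding inj_on_def by blast

lemma Fact_all: "\<forall>t\<in>\<sigma> ` I. \<forall>a. \<forall>x\<in>Fs t. actF a x \<in> Fs t" using Fsact by blast


context assumes WK0: "W \<inter> K = {0}"
begin

lemma jA: "j = i0"
proof (rule ccontr)
  assume "j \<noteq> i0"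
  then have "G (Suc i0) = ssum (G i0) (G (Suc i0) \<inter> K)" using noncollapse[OF i0I] by simp
  also have "\<dots> = {0}" using WK0 Gpre[of i0] unfolding W_def ssum_def by auto
  finally show False using Wne unfolding W_def by simp
qed

lemma YWK: "ssum W K = Y" using LSj jA unfolding W_def by simp

lemma ndK: "x \<in> K \<Longrightarrow> \<forall>y\<in>K. b x y = 0 \<Longrightarrow> x = 0"
proof -
  assume x: "x \<in> K" and o: "\<forall>y\<in>K. b x y = 0"
  have "b x y = 0" if "y \<in> Y" for y
  proof -
    have "y \<in> ssum W K" using YWK that by simp
    then obtain w k where "y = w + k" "w \<in> W" "k \<in> K" unfolding ssum_def by blast
    then show ?thesis using o x orthKW by (simp add: badd2)
  qed
  then show "x = 0" using nd x KY by blast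
qed

lemma goodA: "good K act m (\<lambda>i. G i \<inter> K) (I - {i0, j}) \<sigma> \<pi>"
proof (rule reduction)
  show "E.subspace K" by (rule Ksub)
  show "K \<subseteq> K" by simp
  show "K \<subseteq> ssum W K"
  proof
    fix k assume "k \<in> K" then have "0 + k \<in> ssum W K" using ssum_mem E.subspace_0[OF Wsub] by blast
    then show "k \<in> ssum W K" by simp
  qed
  show "W \<inter> K = {0}" by (rule WK0)
  show "\<And>a y. y \<in> K \<Longrightarrow> act a y \<in> K" by (rule Kact)
  show "\<And>a y. y \<in> K \<Longrightarrow> act a y - act a y \<in> W" using E.subspace_0[OF Wsub] by simp
  show "\<And>a x y. x \<in> K \<Longrightarrow> y \<in> K \<Longrightarrow> act a (x + y) = act a x + act a y" using actadd KY by blast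
  show "\<And>a x y. x \<in> K \<Longrightarrow> y \<in> K \<Longrightarrow> b (act a x) y = b x (act (invl a) y)" using compat KY by blast
  show "\<And>x. x \<in> K \<Longrightarrow> \<forall>y\<in>K. b x y = 0 \<Longrightarrow> x = 0" by (rule ndK)
qed

lemma glueA: assumes "concl K (\<sigma> ` (I - {i0, j})) \<psi>r" shows "\<exists>\<psi>. concl Y (\<sigma> ` I) \<psi>"
proof -
  have T: "\<sigma> ` I = {\<sigma> i0} \<union> \<sigma> ` (I - {i0, j})" using sigma_split jA by simp
  have D: "{\<sigma> i0} \<inter> \<sigma> ` (I - {i0, j}) = {}" using sigma_disj jA by simp
  have "concl Y ({\<sigma> i0} \<union> \<sigma> ` (I - {i0, j})) (\<lambda>t. if t \<in> {\<sigma> i0} then (\<lambda>t. \<psi>0) t else \<psi>r t)"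
  proof (rule glue[OF concl0 assms D])
    show "finite {\<sigma> i0}" by simp
    show "finite (\<sigma> ` (I - {i0, j}))" using finI by simp
    show "ssum W K = Y" by (rule YWK)
    show "W \<inter> K = {0}" by (rule WK0)
    show "\<forall>x\<in>W. \<forall>y\<in>K. b x y = 0" unfolding K_def by blast
    show "E.subspace W" by (rule Wsub)
    show "E.subspace K" by (rule Ksub)
    show "\<forall>t\<in>{\<sigma> i0} \<union> \<sigma> ` (I - {i0, j}). \<forall>a. \<forall>x\<in>Fs t. actF a x \<in> Fs t" using Fact_all T by simp
  qed
  then show ?thesis using T by auto
qed

end


lemma sum_delta_scale: "finite B' \<Longrightarrow> w \<in> B' \<Longrightarrow> (\<Sum>v\<in>B'. sE (if v = w then 1 else 0) (f v)) = f w"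
proof -
  assume a: "finite B'" "w \<in> B'"
  have "(\<Sum>v\<in>B'. sE (if v = w then 1 else 0) (f v)) = (\<Sum>v\<in>B'. if w = v then f v else 0)"
    by (rule sum.cong) auto
  then show ?thesis using a by (simp add: sum.delta)
qed

lemma sum_delta_mult2: "finite B' \<Longrightarrow> w \<in> B' \<Longrightarrow> (\<Sum>v\<in>B'. f v * (if v = w then 1 else 0)) = (f w :: 'k)"
proof -
  assume a: "finite B'" "w \<in> B'"
  have "(\<Sum>v\<in>B'. f v * (if v = w then 1 else 0)) = (\<Sum>v\<in>B'. if w = v then f v else 0)"
    by (rule sum.cong) auto
  then show ?thesis using a by (simp add: sum.delta)
qed

definition "uu = (SOME u'. (\<forall>v\<in>B. u' v \<in> Y) \<and> (\<forall>v\<in>B. \<forall>v'\<in>B. b v (u' v') = (if v = v' then 1 else 0))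
     \<and> (\<forall>v\<in>B. \<forall>v'\<in>B. b (u' v) (u' v') = 0))"
definition "PW y = (\<Sum>v\<in>B. sE (b y (uu v)) v)"
definition "PU y = (\<Sum>v\<in>B. sE (b v y) (uu v))"
definition "Y2 = {y\<in>Y. (\<forall>v\<in>B. b v y = 0) \<and> (\<forall>v\<in>B. b y (uu v) = 0)}"
definition "act2 a y = act a y - PW (act a y)"
definition "U = E.span (uu ` B)"
definition "ej x = (SOME e. e \<in> G (Suc j) \<and> \<pi> j e = x)"
definition "\<psi>j x = PU (ej x)"

lemma PU_add: "PU (x + y) = PU x + PU y"
  unfolding PU_def by (simp add: badd2 E.scale_left_distrib sum.distrib)
lemma PU_scale: "PU (sE c x) = sE c (PU x)"
  unfolding PU_def by (simp add: bsc2 E.scale_sum_right)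
lemma PU_diff: "PU (x - y) = PU x - PU y"
  using PU_add[of "x - y" y] by simp
lemma PU_zero: "PU 0 = 0" using PU_scale[of 0 0] by simp
lemma PW_add: "PW (x + y) = PW x + PW y"
  unfolding PW_def by (simp add: badd1 E.scale_left_distrib sum.distrib)

lemma PWW: "PW y \<in> W" unfolding PW_def using B(1) by (intro E.subspace_sum[OF Wsub] E.subspace_scale[OF Wsub]) auto

lemma ej: "x \<in> Fs (\<sigma> j) \<Longrightarrow> ej x \<in> G (Suc j) \<and> \<pi> j (ej x) = x"
proof -
  assume "x \<in> Fs (\<sigma> j)"
  then have "x \<in> \<pi> j ` G (Suc j)" using \<pi>img[OF jI] by simp
  then obtain e where "e \<in> G (Suc j)" "x = \<pi> j e" by (rule imageE) simp
  then have "\<exists>e. e \<in> G (Suc j) \<and> \<pi> j e = x" by blast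
  then show ?thesis unfolding ej_def by (rule someI_ex)
qed

lemma \<pi>j_mem: "e \<in> G (Suc j) \<Longrightarrow> \<pi> j e \<in> Fs (\<sigma> j)"
proof -
  assume "e \<in> G (Suc j)"
  then have "\<pi> j e \<in> \<pi> j ` G (Suc j)" by (rule imageI)
  then show ?thesis using \<pi>img[OF jI] by simp
qed

lemma sij: "\<sigma> i0 \<noteq> \<sigma> j" if "i0 \<noteq> j" using sinj i0I jI that unfolding inj_on_def by blast

context assumes WK: "W \<subseteq> K"
begin

lemma jne: "j \<noteq> i0"
proof
  assume "j = i0"
  then have "G (Suc i0) \<inter> K \<subseteq> G i0" using collapse by simp
  then have "W \<subseteq> G i0" using WK unfolding W_def by blast
  then show False using Gpre[of i0] Wne Wsub E.subspace_0 by blast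
qed

lemma bWK: "w \<in> W \<Longrightarrow> k \<in> K \<Longrightarrow> b w k = 0" unfolding K_def by blast

lemma Biso: "\<forall>v\<in>B. \<forall>v'\<in>B. b v v' = 0" using B(1) WK bWK by blast

lemma uu: "(\<forall>v\<in>B. uu v \<in> Y) \<and> (\<forall>v\<in>B. \<forall>v'\<in>B. b v (uu v') = (if v = v' then 1 else 0))
     \<and> (\<forall>v\<in>B. \<forall>v'\<in>B. b (uu v) (uu v') = 0)"
proof -
  have "\<exists>u'. (\<forall>v\<in>B. u' v \<in> Y) \<and> (\<forall>v\<in>B. \<forall>v'\<in>B. b v (u' v') = (if v = v' then 1 else 0))
     \<and> (\<forall>v\<in>B. \<forall>v'\<in>B. b (u' v) (u' v') = 0)"
    by (rule iso_dual_basis[OF Ysub finB BY Biso u(1) u(2)])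
  then show ?thesis unfolding uu_def by (rule someI_ex)
qed

lemma uuY: "v \<in> B \<Longrightarrow> uu v \<in> Y" using uu by blast
lemma uud: "v \<in> B \<Longrightarrow> v' \<in> B \<Longrightarrow> b v (uu v') = (if v = v' then 1 else 0)" using uu by blast
lemma uuiso: "v \<in> B \<Longrightarrow> v' \<in> B \<Longrightarrow> b (uu v) (uu v') = 0" using uu by blast

lemma bvW: "v \<in> B \<Longrightarrow> w \<in> W \<Longrightarrow> b v w = 0" using B(1) WK bWK by blast

lemma PUY: "PU y \<in> Y" unfolding PU_def using uuY by (intro E.subspace_sum[OF Ysub] E.subspace_scale[OF Ysub]) auto
lemma PU_U: "PU y \<in> U" unfolding PU_def U_def by (intro E.span_sum E.span_scale E.span_base) auto
lemma UY: "U \<subseteq> Y" unfolding U_def using uuY Ysub E.span_minimal[of "uu ` B" Y] by blast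
lemma Usub: "E.subspace U" unfolding U_def by simp

lemma bvPU: "v \<in> B \<Longrightarrow> b v (PU y) = b v y"
proof -
  assume v: "v \<in> B"
  have "b v (PU y) = (\<Sum>v'\<in>B. b v' y * (if v = v' then 1 else 0))"
    unfolding PU_def using uud v by (simp add: bsum2 bsc2)
  then show ?thesis using sum_delta_mult[OF finB v] by simp
qed

lemma bPWu: "v \<in> B \<Longrightarrow> b (PW y) (uu v) = b y (uu v)"
proof -
  assume v: "v \<in> B"
  have "b (PW y) (uu v) = (\<Sum>v'\<in>B. b y (uu v') * (if v' = v then 1 else 0))"
    unfolding PW_def using uud v by (simp add: bsum1 bsc1)
  then show ?thesis using sum_delta_mult2[OF finB v] by simp
qed

lemma bvPW: "v \<in> B \<Longrightarrow> b v (PW y) = 0"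
  unfolding PW_def using Biso by (simp add: bsum2 bsc2)

lemma bPUu: "v \<in> B \<Longrightarrow> b (PU y) (uu v) = 0"
  unfolding PU_def using uuiso by (simp add: bsum1 bsc1)

lemma resY2: "y \<in> Y \<Longrightarrow> y - PU y - PW y \<in> Y2"
proof -
  assume y: "y \<in> Y"
  have inY: "y - PU y - PW y \<in> Y"
    using y PUY PWW WY E.subspace_diff[OF Ysub] by blast
  have "b v (y - PU y - PW y) = 0" if "v \<in> B" for v using that bvPU bvPW by (simp add: bdiff2)
  moreover have "b (y - PU y - PW y) (uu v) = 0" if "v \<in> B" for v using that bPUu bPWu by (simp add: bdiff1)
  ultimately show ?thesis unfolding Y2_def using inY by blast
qed

lemma PU_K: "k \<in> K \<Longrightarrow> PU k = 0"
proof -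
  assume k: "k \<in> K"
  then have "\<forall>v\<in>B. b v k = 0" using Kchar KY by blast
  then show ?thesis unfolding PU_def by simp
qed

lemma resK: "k \<in> K \<Longrightarrow> k - PW k \<in> Y2"
  using resY2[of k] PU_K[of k] KY by auto

lemma Y2K: "Y2 \<subseteq> K" unfolding Y2_def using Kchar by blast
lemma Y2Y: "Y2 \<subseteq> Y" unfolding Y2_def by blast

lemma Y2sub: "E.subspace Y2"
  unfolding E.subspace_def Y2_def
  using Ysub E.subspace_0 E.subspace_add E.subspace_scale by (auto simp: badd2 bsc2 badd1 bsc1)

lemma Y2_W: "w \<in> W \<Longrightarrow> y \<in> Y2 \<Longrightarrow> b w y = 0" using Y2K bWK by blast

lemma bUY2: "x \<in> U \<Longrightarrow> y \<in> Y2 \<Longrightarrow> b x y = 0"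
  unfolding U_def
proof (induction rule: E.span_induct_alt)
  case base then show ?case by simp
next
  case (step c x z)
  then obtain v where v: "v \<in> B" "x = uu v" by blast
  have "b (uu v) y = ep * b y (uu v)" by (rule bswap)
  then have "b x y = 0" using v step(3) unfolding Y2_def by simp
  then show ?case using step by (simp add: badd1 bsc1)
qed

lemma bUU: "x \<in> U \<Longrightarrow> y \<in> U \<Longrightarrow> b x y = 0"
proof -
  assume x: "x \<in> U" and y: "y \<in> U"
  have gen: "b (uu v) y = 0" if "v \<in> B" for v
    using y unfolding U_def
  proof (induction rule: E.span_induct_alt)
    case base then show ?case by simp
  next
    case (step c x' z)
    then obtain v' where "v' \<in> B" "x' = uu v'" by blast
    then show ?case using step uuiso that by (simp add: badd2 bsc2)
  qed
  show ?thesis using x unfolding U_def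
  proof (induction rule: E.span_induct_alt)
    case base then show ?case by simp
  next
    case (step c x' z)
    then obtain v where "v \<in> B" "x' = uu v" by blast
    then show ?case using step gen by (simp add: badd1 bsc1)
  qed
qed

lemma PU_id: "x \<in> U \<Longrightarrow> PU x = x"
  unfolding U_def
proof (induction rule: E.span_induct_alt)
  case base then show ?case by (rule PU_zero)
next
  case (step c x z)
  then obtain v where v: "v \<in> B" "x = uu v" by blast
  have "PU (uu v) = (\<Sum>v'\<in>B. sE (if v' = v then 1 else 0) (uu v'))"
    unfolding PU_def using uud v(1) by (intro sum.cong) auto
  also have "\<dots> = uu v" using sum_delta_scale[OF finB v(1)] .
  finally show ?case using step v by (simp add: PU_add PU_scale)
qed

lemma WY2_0: "W \<inter> Y2 = {0}"
proof
  show "W \<inter> Y2 \<subseteq> {0}"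
  proof
    fix w assume w: "w \<in> W \<inter> Y2"
    have "b w y = 0" if y: "y \<in> Y" for y
    proof -
      have r: "y - PU y - PW y \<in> Y2" using resY2[OF y] .
      have e: "y = PU y + PW y + (y - PU y - PW y)" by simp
      have "b w (PU y) = 0" unfolding PU_def using w unfolding Y2_def by (simp add: bsum2 bsc2)
      moreover have "b w (PW y) = 0" using w PWW WK bWK by blast
      moreover have "b w (y - PU y - PW y) = 0" using w r Y2_W by blast
      ultimately show ?thesis using e by (metis badd2 add_0)
    qed
    then have "w = 0" using nd w WY by blast
    then show "w \<in> {0}" by simp
  qed
  show "{0} \<subseteq> W \<inter> Y2" using E.subspace_0[OF Wsub] E.subspace_0[OF Y2sub] by blast
qed

lemma goodB: "good Y2 act2 m (\<lambda>i. G i \<inter> Y2) (I - {i0, j}) \<sigma> \<pi>"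
proof (rule reduction)
  show "E.subspace Y2" by (rule Y2sub)
  show "Y2 \<subseteq> K" by (rule Y2K)
  show "K \<subseteq> ssum W Y2"
  proof
    fix k assume k: "k \<in> K"
    have "k = PW k + (k - PW k)" by simp
    then show "k \<in> ssum W Y2" using ssum_mem[OF PWW[of k] resK[OF k]] by simp
  qed
  show "W \<inter> Y2 = {0}" by (rule WY2_0)
  show "\<And>a y. y \<in> Y2 \<Longrightarrow> act2 a y \<in> Y2"
  proof -
    fix a y assume "y \<in> Y2"
    then have "act a y \<in> K" using Kact Y2K by blast
    then show "act2 a y \<in> Y2" unfolding act2_def by (rule resK)
  qed
  show "\<And>a y. y \<in> Y2 \<Longrightarrow> act a y - act2 a y \<in> W" unfolding act2_def using PWW by simp
  show "\<And>a x y. x \<in> Y2 \<Longrightarrow> y \<in> Y2 \<Longrightarrow> act2 a (x + y) = act2 a x + act2 a y"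
    unfolding act2_def using actadd Y2Y PW_add by (simp add: subset_iff)
  show "\<And>a x y. x \<in> Y2 \<Longrightarrow> y \<in> Y2 \<Longrightarrow> b (act2 a x) y = b x (act2 (invl a) y)"
  proof -
    fix a x y assume x: "x \<in> Y2" and y: "y \<in> Y2"
    have "b (PW z) y = 0" for z using y Y2_W PWW by blast
    moreover have "b x (PW z) = 0" for z using x Y2K orthKW PWW by blast
    moreover have "b (act a x) y = b x (act (invl a) y)" using compat x y Y2Y by blast
    ultimately show "b (act2 a x) y = b x (act2 (invl a) y)" unfolding act2_def by (simp add: bdiff1 bdiff2)
  qed
  show "\<And>x. x \<in> Y2 \<Longrightarrow> \<forall>y\<in>Y2. b x y = 0 \<Longrightarrow> x = 0"
  proof -
    fix x assume x: "x \<in> Y2" and o: "\<forall>y\<in>Y2. b x y = 0"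
    have "b x y = 0" if y: "y \<in> Y" for y
    proof -
      have e: "y = PU y + PW y + (y - PU y - PW y)" by simp
      have "b x (PU y) = 0" unfolding PU_def using x unfolding Y2_def by (simp add: bsum2 bsc2)
      moreover have "b x (PW y) = 0" using x Y2K orthKW PWW by blast
      moreover have "b x (y - PU y - PW y) = 0" using o resY2[OF y] by blast
      ultimately show ?thesis using e by (metis badd2 add_0)
    qed
    then show "x = 0" using nd x Y2Y by blast
  qed
qed


lemma PU_G: "e \<in> G (Suc j) \<Longrightarrow> e' \<in> G (Suc j) \<Longrightarrow> \<pi> j e = \<pi> j e' \<Longrightarrow> PU e = PU e'"
proof -
  assume e: "e \<in> G (Suc j)" "e' \<in> G (Suc j)" "\<pi> j e = \<pi> j e'"
  have "\<pi> j (e - e') = 0" using \<pi>diff[OF jI e(1,2)] e(3) by simp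
  moreover have "e - e' \<in> G (Suc j)" using E.subspace_diff[OF Gsub e(1,2)] jprops(1) by simp
  ultimately have "e - e' \<in> G j" using \<pi>ker[OF jI] by blast
  then have "PU (e - e') = 0" using GjK PU_K by blast
  then show ?thesis using PU_diff by simp
qed

lemma \<psi>j_eq: "e \<in> G (Suc j) \<Longrightarrow> \<psi>j (\<pi> j e) = PU e"
proof -
  assume e: "e \<in> G (Suc j)"
  have "ej (\<pi> j e) \<in> G (Suc j) \<and> \<pi> j (ej (\<pi> j e)) = \<pi> j e" using ej[OF \<pi>j_mem[OF e]] .
  then show ?thesis unfolding \<psi>j_def using PU_G[of "ej (\<pi> j e)" e] e by simp
qed

lemma GSjY: "G (Suc j) \<subseteq> Y" using GY jprops(1) by simp

lemma bWPU: "w \<in> W \<Longrightarrow> e \<in> Y \<Longrightarrow> b w (PU e) = b w e \<and> b (PU e) w = b e w"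
proof -
  assume w: "w \<in> W" and e: "e \<in> Y"
  have "e - PU e \<in> Y" using e PUY E.subspace_diff[OF Ysub] by blast
  moreover have "\<forall>v\<in>B. b v (e - PU e) = 0" using bvPU by (simp add: bdiff2)
  ultimately have k: "e - PU e \<in> K" using Kchar by blast
  then have "b w (e - PU e) = 0" "b (e - PU e) w = 0" using bWK w orthKW by blast+
  then show ?thesis by (simp add: bdiff1 bdiff2)
qed

lemma concl01: "concl (ssum W U) {\<sigma> i0, \<sigma> j} (\<lambda>t. if t = \<sigma> i0 then \<psi>0 else \<psi>j)"
  unfolding concl_def
proof (intro conjI ballI allI impI)
  have ne: "\<sigma> i0 \<noteq> \<sigma> j" using sij jne by auto
  have WA: "W \<subseteq> ssum W U"
  proof
    fix w assume "w \<in> W" then have "w + 0 \<in> ssum W U" using ssum_mem E.subspace_0[OF Usub] by blast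
    then show "w \<in> ssum W U" by simp
  qed
  have UA: "U \<subseteq> ssum W U"
  proof
    fix x assume "x \<in> U" then have "0 + x \<in> ssum W U" using ssum_mem E.subspace_0[OF Wsub] by blast
    then show "x \<in> ssum W U" by simp
  qed
  {
    fix t x assume t: "t \<in> {\<sigma> i0, \<sigma> j}" and x: "x \<in> Fs t"
    show "(if t = \<sigma> i0 then \<psi>0 else \<psi>j) x \<in> ssum W U"
    proof (cases "t = \<sigma> i0")
      case True then show ?thesis using \<psi>0 x WA by auto
    next
      case False then show ?thesis unfolding \<psi>j_def using PU_U UA by auto
    qed
  next
    fix t x y assume t: "t \<in> {\<sigma> i0, \<sigma> j}" and x: "x \<in> Fs t" and y: "y \<in> Fs t"
    show "(if t = \<sigma> i0 then \<psi>0 else \<psi>j) (x + y) = (if t = \<sigma> i0 then \<psi>0 else \<psi>j) x + (if t = \<sigma> i0 then \<psi>0 else \<psi>j) y"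
    proof (cases "t = \<sigma> i0")
      case True then show ?thesis using concl0 x y unfolding concl_def by simp
    next
      case False
      then have x: "x \<in> Fs (\<sigma> j)" and y: "y \<in> Fs (\<sigma> j)" using t x y by auto
      have ex: "ej x \<in> G (Suc j)" "\<pi> j (ej x) = x" using ej[OF x] by auto
      have ey: "ej y \<in> G (Suc j)" "\<pi> j (ej y) = y" using ej[OF y] by auto
      have s: "ej x + ej y \<in> G (Suc j)" using E.subspace_add[OF Gsub ex(1) ey(1)] jprops(1) by simp
      have "\<pi> j (ej x + ej y) = x + y" using \<pi>add[OF jI ex(1) ey(1)] ex ey by simp
      then have "\<psi>j (x + y) = PU (ej x + ej y)" using \<psi>j_eq[OF s] by simp
      then show ?thesis using False PU_add unfolding \<psi>j_def by simp
    qed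
  next
    fix t c x assume t: "t \<in> {\<sigma> i0, \<sigma> j}" and x: "x \<in> Fs t"
    show "(if t = \<sigma> i0 then \<psi>0 else \<psi>j) (sF c x) = sE c ((if t = \<sigma> i0 then \<psi>0 else \<psi>j) x)"
    proof (cases "t = \<sigma> i0")
      case True then show ?thesis using concl0 x unfolding concl_def by simp
    next
      case False
      then have x: "x \<in> Fs (\<sigma> j)" using t x by auto
      have ex: "ej x \<in> G (Suc j)" "\<pi> j (ej x) = x" using ej[OF x] by auto
      have s: "sE c (ej x) \<in> G (Suc j)" using E.subspace_scale[OF Gsub ex(1)] jprops(1) by simp
      have "\<pi> j (sE c (ej x)) = sF c x" using \<pi>sc[OF jI ex(1)] ex by simp
      then have "\<psi>j (sF c x) = PU (sE c (ej x))" using \<psi>j_eq[OF s] by simp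
      then show ?thesis using False PU_scale unfolding \<psi>j_def by simp
    qed
  next
    fix z assume z: "z \<in> ssum W U"
    then obtain w x where wx: "z = w + x" "w \<in> W" "x \<in> U" unfolding ssum_def by blast
    have "x \<in> ssum (G (Suc j)) K" using LSj UY wx(3) by blast
    then obtain e k where ek: "x = e + k" "e \<in> G (Suc j)" "k \<in> K" unfolding ssum_def by blast
    have "PU x = PU e" using ek PU_add PU_K by simp
    then have xe: "\<psi>j (\<pi> j e) = x" using \<psi>j_eq[OF ek(2)] PU_id[OF wx(3)] by simp
    define xs where "xs = (\<lambda>t. if t = \<sigma> i0 then \<pi> i0 w else \<pi> j e)"
    have "(\<forall>t\<in>{\<sigma> i0, \<sigma> j}. xs t \<in> Fs t)" unfolding xs_def using \<pi>W[OF wx(2)] \<pi>j_mem[OF ek(2)] ne by auto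
    moreover have "z = (\<Sum>t\<in>{\<sigma> i0, \<sigma> j}. (if t = \<sigma> i0 then \<psi>0 else \<psi>j) (xs t))"
      unfolding xs_def using ne xe \<psi>0_inv[OF wx(2)] wx(1) by simp
    ultimately show "\<exists>xs. (\<forall>t\<in>{\<sigma> i0, \<sigma> j}. xs t \<in> Fs t) \<and> z = (\<Sum>t\<in>{\<sigma> i0, \<sigma> j}. (if t = \<sigma> i0 then \<psi>0 else \<psi>j) (xs t))"
      by blast
  next
    fix xs t assume h: "(\<forall>t\<in>{\<sigma> i0, \<sigma> j}. xs t \<in> Fs t) \<and> (\<Sum>t\<in>{\<sigma> i0, \<sigma> j}. (if t = \<sigma> i0 then \<psi>0 else \<psi>j) (xs t)) = 0"
      and t: "t \<in> {\<sigma> i0, \<sigma> j}"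
    have x0: "xs (\<sigma> i0) \<in> Fs (\<sigma> i0)" and xj: "xs (\<sigma> j) \<in> Fs (\<sigma> j)" using h by auto
    have sum0: "\<psi>0 (xs (\<sigma> i0)) + \<psi>j (xs (\<sigma> j)) = 0" using h ne by simp
    define w where "w = \<psi>0 (xs (\<sigma> i0))"
    define e where "e = ej (xs (\<sigma> j))"
    have wW: "w \<in> W" using \<psi>0[OF x0] unfolding w_def by simp
    have eG: "e \<in> G (Suc j)" "\<pi> j e = xs (\<sigma> j)" using ej[OF xj] unfolding e_def by auto
    have we: "w + PU e = 0" using sum0 unfolding w_def e_def \<psi>j_def by simp
    have "b v e = 0" if v: "v \<in> B" for v
    proof -
      have "b v (w + PU e) = 0" using we by simp
      then show ?thesis using bvW[OF v wW] bvPU[OF v] by (simp add: badd2)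
    qed
    then have eK: "e \<in> K" using Kchar GSjY eG(1) by blast
    then have "e \<in> G j" using collapse eG(1) by blast
    then have "e \<in> {x \<in> G (Suc j). \<pi> j x = 0}" using \<pi>ker[OF jI] by simp
    then have xj0: "xs (\<sigma> j) = 0" using eG by simp
    have "w = 0" using we PU_K[OF eK] by simp
    then have "xs (\<sigma> i0) = \<pi> i0 0" using \<psi>0[OF x0] unfolding w_def by metis
    then have x00: "xs (\<sigma> i0) = 0" using \<pi>0[OF i0I] by simp
    show "xs t = 0" using t x00 xj0 by auto
  next
    fix s t a x y assume s: "s \<in> {\<sigma> i0, \<sigma> j}" and t: "t \<in> {\<sigma> i0, \<sigma> j}" and x: "x \<in> Fs s" and y: "y \<in> Fs t"
    show "b ((if s = \<sigma> i0 then \<psi>0 else \<psi>j) (actF a x)) ((if t = \<sigma> i0 then \<psi>0 else \<psi>j) y) =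
       b ((if s = \<sigma> i0 then \<psi>0 else \<psi>j) x) ((if t = \<sigma> i0 then \<psi>0 else \<psi>j) (actF (invl a) y))"
    proof (cases "s = \<sigma> i0")
      case sT: True
      then have x: "x \<in> Fs (\<sigma> i0)" using x by simp
      have wx: "\<psi>0 x \<in> W" using \<psi>0[OF x] by simp
      show ?thesis
      proof (cases "t = \<sigma> i0")
        case True then show ?thesis using sT concl0 x y unfolding concl_def by simp
      next
        case False
        then have y: "y \<in> Fs (\<sigma> j)" using t y by auto
        have ey: "ej y \<in> G (Suc j)" "\<pi> j (ej y) = y" using ej[OF y] by auto
        have aey: "act (invl a) (ej y) \<in> G (Suc j)" using Gact ey(1) jprops(1) by simp
        have "\<psi>j (actF (invl a) y) = PU (act (invl a) (ej y))"
          using \<psi>j_eq[OF aey] \<pi>act[OF jI ey(1)] ey(2) by simp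
        moreover have "\<psi>0 (actF a x) = act a (\<psi>0 x)" using \<psi>0_act[OF x] .
        moreover have "b (act a (\<psi>0 x)) (PU (ej y)) = b (act a (\<psi>0 x)) (ej y)"
          using bWPU[OF Wact[OF wx] ] GSjY ey(1) by blast
        moreover have "b (\<psi>0 x) (PU (act (invl a) (ej y))) = b (\<psi>0 x) (act (invl a) (ej y))"
          using bWPU[OF wx] GSjY aey by blast
        moreover have "b (act a (\<psi>0 x)) (ej y) = b (\<psi>0 x) (act (invl a) (ej y))"
          using compat wx WY GSjY ey(1) by blast
        ultimately show ?thesis using sT False unfolding \<psi>j_def by simp
      qed
    next
      case sF: False
      then have x: "x \<in> Fs (\<sigma> j)" using s x by auto
      have ex: "ej x \<in> G (Suc j)" "\<pi> j (ej x) = x" using ej[OF x] by auto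
      have aex: "act a (ej x) \<in> G (Suc j)" using Gact ex(1) jprops(1) by simp
      have pj: "\<psi>j (actF a x) = PU (act a (ej x))"
        using \<psi>j_eq[OF aex] \<pi>act[OF jI ex(1)] ex(2) by simp
      show ?thesis
      proof (cases "t = \<sigma> i0")
        case True
        then have y: "y \<in> Fs (\<sigma> i0)" using y by simp
        have wy: "\<psi>0 y \<in> W" using \<psi>0[OF y] by simp
        have "\<psi>0 (actF (invl a) y) = act (invl a) (\<psi>0 y)" using \<psi>0_act[OF y] .
        moreover have "b (PU (act a (ej x))) (\<psi>0 y) = b (act a (ej x)) (\<psi>0 y)"
          using bWPU[OF wy] GSjY aex by blast
        moreover have "b (PU (ej x)) (act (invl a) (\<psi>0 y)) = b (ej x) (act (invl a) (\<psi>0 y))"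
          using bWPU[OF Wact[OF wy]] GSjY ex(1) by blast
        moreover have "b (act a (ej x)) (\<psi>0 y) = b (ej x) (act (invl a) (\<psi>0 y))"
          using compat wy WY GSjY ex(1) by blast
        ultimately show ?thesis using sF True pj unfolding \<psi>j_def by simp
      next
        case False
        have "b (PU (act a (ej x))) (PU (ej y')) = 0" for y' using bUU PU_U by blast
        moreover have "b (PU (ej x)) (PU (ej y')) = 0" for y' using bUU PU_U by blast
        ultimately show ?thesis using sF False pj unfolding \<psi>j_def by simp
      qed
    qed
  }
qed

lemma decompB: "ssum (ssum W U) Y2 = Y"
proof
  show "ssum (ssum W U) Y2 \<subseteq> Y" unfolding ssum_def
    using WY UY Y2Y E.subspace_add[OF Ysub] by blast
  show "Y \<subseteq> ssum (ssum W U) Y2"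
  proof
    fix y assume y: "y \<in> Y"
    have "y = (PW y + PU y) + (y - PU y - PW y)" by simp
    moreover have "PW y + PU y \<in> ssum W U" using ssum_mem[OF PWW PU_U] .
    ultimately show "y \<in> ssum (ssum W U) Y2" using ssum_mem resY2[OF y] by metis
  qed
qed

lemma AsubB: "E.subspace (ssum W U)" unfolding ssum_def using E.subspace_sums[OF Wsub Usub] .

lemma orthB: "\<forall>x\<in>ssum W U. \<forall>y\<in>Y2. b x y = 0"
proof (intro ballI)
  fix x y assume x: "x \<in> ssum W U" and y: "y \<in> Y2"
  then obtain w z where wz: "x = w + z" "w \<in> W" "z \<in> U" unfolding ssum_def by blast
  then show "b x y = 0" using Y2_W bUY2 y by (simp add: badd1)
qed

lemma intB: "ssum W U \<inter> Y2 = {0}"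
proof
  show "ssum W U \<inter> Y2 \<subseteq> {0}"
  proof
    fix x assume x: "x \<in> ssum W U \<inter> Y2"
    then obtain w z where wz: "x = w + z" "w \<in> W" "z \<in> U" unfolding ssum_def by blast
    have "b v z = 0" if v: "v \<in> B" for v
    proof -
      have "b v x = 0" using x v unfolding Y2_def by blast
      then show ?thesis using wz bvW[OF v wz(2)] by (simp add: badd2)
    qed
    then have "PU z = 0" unfolding PU_def by simp
    then have z0: "z = 0" using PU_id[OF wz(3)] by simp
    then have "w \<in> W \<inter> Y2" using wz x by simp
    then have "w = 0" using WY2_0 by blast
    then show "x \<in> {0}" using z0 wz by simp
  qed
  show "{0} \<subseteq> ssum W U \<inter> Y2" using E.subspace_0[OF AsubB] E.subspace_0[OF Y2sub] by blast
qed

lemma glueB: assumes "concl Y2 (\<sigma> ` (I - {i0, j})) \<psi>r" shows "\<exists>\<psi>. concl Y (\<sigma> ` I) \<psi>"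
proof -
  have T: "\<sigma> ` I = {\<sigma> i0, \<sigma> j} \<union> \<sigma> ` (I - {i0, j})" using sigma_split by simp
  have D: "{\<sigma> i0, \<sigma> j} \<inter> \<sigma> ` (I - {i0, j}) = {}" using sigma_disj by simp
  have "concl Y ({\<sigma> i0, \<sigma> j} \<union> \<sigma> ` (I - {i0, j}))
     (\<lambda>t. if t \<in> {\<sigma> i0, \<sigma> j} then (\<lambda>t. if t = \<sigma> i0 then \<psi>0 else \<psi>j) t else \<psi>r t)"
  proof (rule glue[OF concl01 assms D])
    show "finite {\<sigma> i0, \<sigma> j}" by simp
    show "finite (\<sigma> ` (I - {i0, j}))" using finI by simp
    show "ssum (ssum W U) Y2 = Y" by (rule decompB)
    show "ssum W U \<inter> Y2 = {0}" by (rule intB)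
    show "\<forall>x\<in>ssum W U. \<forall>y\<in>Y2. b x y = 0" by (rule orthB)
    show "E.subspace (ssum W U)" by (rule AsubB)
    show "E.subspace Y2" by (rule Y2sub)
    show "\<forall>t\<in>{\<sigma> i0, \<sigma> j} \<union> \<sigma> ` (I - {i0, j}). \<forall>a. \<forall>x\<in>Fs t. actF a x \<in> Fs t" using Fact_all T by simp
  qed
  then show ?thesis using T by auto
qed

end

end

context ctx2
begin

lemma good_empty: assumes g: "good Y act m G {} \<sigma> \<pi>" shows "concl Y {} \<psi>"
proof -
  have G0: "G 0 = {0}" and Gm: "G m = Y" and Id: "{} = {i. i < m \<and> G (Suc i) \<noteq> G i}"
    using g[unfolded good_def, THEN conjunct2, THEN conjunct2, THEN conjunct2, THEN conjunct2, THEN conjunct2, THEN conjunct1] g[unfolded good_def, THEN conjunct2, THEN conjunct2, THEN conjunct2, THEN conjunct2, THEN conjunct2, THEN conjunct2, THEN conjunct1] g[unfolded good_def, THEN conjunct2, THEN conjunct2, THEN conjunct2, THEN conjunct2, THEN conjunct2, THEN conjunct2, THEN conjunct2, THEN conjunct2, THEN conjunct2, THEN conjunct2, THEN conjunct1] by simp_all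
  have "i \<le> m \<Longrightarrow> G i = {0}" for i
  proof (induction i)
    case 0 then show ?case using G0 by simp
  next
    case (Suc i)
    then have "G (Suc i) = G i" using Id by auto
    then show ?case using Suc by simp
  qed
  then have "Y = {0}" using Gm by auto
  then show ?thesis unfolding concl_def by simp
qed

lemma main: "good Y act m G I \<sigma> \<pi> \<Longrightarrow> \<exists>\<psi>. concl Y (\<sigma> ` I) \<psi>"
proof (induction "card I" arbitrary: Y act G I rule: less_induct)
  case less
  show ?case
  proof (cases "I = {}")
    case True then show ?thesis using good_empty less.prems by auto
  next
    case False
    have st: "stepctx sE b sF actF invl Fs Y act m G I \<sigma> \<pi> (Min I)"
      by (rule stepctx.intro[OF ctx2_axioms]) (unfold stepctx_axioms_def, use less.prems False in auto)
    interpret S: stepctx sE b sF actF invl Fs Y act m G I \<sigma> \<pi> "Min I" by (rule st)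
    have cardlt: "card (I - {Min I, S.j}) < card I"
    proof -
      have "I - {Min I, S.j} \<subset> I" using S.i0I by blast
      then show ?thesis by (rule psubset_card_mono[OF S.finI])
    qed
    show ?thesis
    proof (cases "S.W \<inter> S.K = {0}")
      case True
      obtain \<psi>r where "concl S.K (\<sigma> ` (I - {Min I, S.j})) \<psi>r"
        using less.hyps[OF cardlt S.goodA[OF True]] by blast
      then show ?thesis using S.glueA[OF True] by blast
    next
      case False
      have "rsub Y act (S.W \<inter> S.K)" using rsub_inter[OF S.Wrsub S.Krsub] .
      then have "S.W \<inter> S.K = {0} \<or> S.W \<inter> S.K = S.W" using S.Wsimple by blast
      then have WK: "S.W \<subseteq> S.K" using False by blast
      obtain \<psi>r where "concl S.Y2 (\<sigma> ` (I - {Min I, S.j})) \<psi>r"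
        using less.hyps[OF cardlt S.goodB[OF WK]] by blast
      then show ?thesis using S.glueB[OF WK] by blast
    qed
  qed
qed

end


theorem theorem4p2p1:
  fixes sA :: "'k::field \<Rightarrow> 'a::ring_1 \<Rightarrow> 'a"
    and invl :: "'a \<Rightarrow> 'a"
    and sE :: "'k \<Rightarrow> 'e::ab_group_add \<Rightarrow> 'e" and actE :: "'a \<Rightarrow> 'e \<Rightarrow> 'e"
    and b :: "'e \<Rightarrow> 'e \<Rightarrow> 'k"
    and sF :: "'k \<Rightarrow> 'f::ab_group_add \<Rightarrow> 'f" and actF :: "'a \<Rightarrow> 'f \<Rightarrow> 'f"
  assumes "k_algebra sA"
    and "k_involution sA invl"
    and "alg_module sA sE actE"
    and "fin_dim sE"
    and "bilinear_form sE b"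
    and "nondegenerate b"
    and "adjoint_compatible actE invl b"
    and "alternating_form b \<or> (symmetric_form b \<and> (2::'k) \<noteq> 0)"
    and "alg_module sA sF actF"
    and "semisimplification sE actE sF actF"
  shows "\<exists>b'. bilinear_form sF b' \<and>
           (symmetric_form b \<longrightarrow> symmetric_form b') \<and>
           (alternating_form b \<longrightarrow> alternating_form b') \<and>
           adjoint_compatible actF invl b' \<and>
           iso_forms sF b' sE b"
proof -
  have vsE: "Vector_Spaces.vector_space sE" and actEadd: "\<And>a x y. actE a (x + y) = actE a x + actE a y"
    using assms(3) unfolding alg_module_def by blast+
  have vsF: "Vector_Spaces.vector_space sF" and actFadd: "\<And>a x y. actF a (x + y) = actF a x + actF a y"
    using assms(9) unfolding alg_module_def by blast+
  have invl2: "\<And>a. invl (invl a) = a" using assms(2) unfolding k_involution_def by blast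
  obtain n Es Fs0 where JH: "JH_filtration sE actE n Es" and DS: "internal_direct_sum sF actF n Fs0"
    and iso: "\<forall>i<n. iso_to_quotient sE actE sF actF (Fs0 i) (Es (Suc i)) (Es i)"
    using assms(10) unfolding semisimplification_def by blast
  interpret C: ctx2 sE b sF actF invl Fs0
    by (rule ctx2.intro, rule ctx.intro[OF vsE assms(5) assms(8) assms(4)], unfold_locales, rule invl2)
  interpret F: vector_space sF by (rule vsF)
  define P where "P i p \<longleftrightarrow> ((\<forall>x\<in>Es (Suc i). \<forall>y\<in>Es (Suc i). p (x + y) = p x + p y) \<and>
          (\<forall>c. \<forall>x\<in>Es (Suc i). p (sE c x) = sF c (p x)) \<and>
          (\<forall>a. \<forall>x\<in>Es (Suc i). p (actE a x) = actF a (p x)) \<and>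
          p ` Es (Suc i) = Fs0 i \<and> {x\<in>Es (Suc i). p x = 0} = Es i)" for i and p :: "'e \<Rightarrow> 'f"
  have "\<forall>i. \<exists>p. i < n \<longrightarrow> P i p"
  proof
    fix i show "\<exists>p. i < n \<longrightarrow> P i p"
    proof (cases "i < n")
      case True
      then have "iso_to_quotient sE actE sF actF (Fs0 i) (Es (Suc i)) (Es i)" using iso by simp
      then have "\<exists>p. P i p" unfolding iso_to_quotient_def P_def .
      then show ?thesis by simp
    qed simp
  qed
  from choice[OF this] obtain \<pi> where \<pi>0: "\<forall>i. i < n \<longrightarrow> P i (\<pi> i)" by (elim exE) (rule that)
  have \<pi>: "(\<forall>x\<in>Es (Suc i). \<forall>y\<in>Es (Suc i). \<pi> i (x + y) = \<pi> i x + \<pi> i y) \<and>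
          (\<forall>c. \<forall>x\<in>Es (Suc i). \<pi> i (sE c x) = sF c (\<pi> i x)) \<and>
          (\<forall>a. \<forall>x\<in>Es (Suc i). \<pi> i (actE a x) = actF a (\<pi> i x)) \<and>
          \<pi> i ` Es (Suc i) = Fs0 i \<and> {x\<in>Es (Suc i). \<pi> i x = 0} = Es i" if "i < n" for i
    using \<pi>0 that unfolding P_def by simp
  have Es0: "Es 0 = {0}" and Esn: "Es n = UNIV" and Essub: "\<And>i. i \<le> n \<Longrightarrow> submodule sE actE (Es i)"
    and Essq: "\<And>i. i < n \<Longrightarrow> simple_quotient sE actE (Es (Suc i)) (Es i)"
    using JH unfolding JH_filtration_def by blast+
  have Esq: "\<And>i. i < n \<Longrightarrow> Es i \<subset> Es (Suc i) \<and> \<not> (\<exists>L. submodule sE actE L \<and> Es i \<subset> L \<and> L \<subset> Es (Suc i))"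
    using Essq unfolding simple_quotient_def by blast
  have rsub_iff: "C.rsub UNIV actE M \<longleftrightarrow> submodule sE actE M" for M
    unfolding C.rsub_def submodule_def by blast
  have nd: "\<And>x. (\<forall>y. b x y = 0) \<Longrightarrow> x = 0" using assms(6) unfolding nondegenerate_def by blast
  have good: "C.good UNIV actE n Es {..<n} id \<pi>"
    unfolding C.good_def
  proof (intro conjI)
    show "C.E.subspace UNIV" by simp
    show "\<forall>a. \<forall>y\<in>UNIV. actE a y \<in> UNIV" by simp
    show "\<forall>a. \<forall>x\<in>UNIV. \<forall>y\<in>UNIV. actE a (x + y) = actE a x + actE a y" using actEadd by simp
    show "\<forall>a. \<forall>x\<in>UNIV. \<forall>y\<in>UNIV. b (actE a x) y = b x (actE (invl a) y)"
      using assms(7) unfolding adjoint_compatible_def by simp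
    show "\<forall>x\<in>UNIV. (\<forall>y\<in>UNIV. b x y = 0) \<longrightarrow> x = 0" using nd by simp
    show "Es 0 = {0}" by (rule Es0)
    show "Es n = UNIV" by (rule Esn)
    show "\<forall>i\<le>n. C.rsub UNIV actE (Es i)" using Essub rsub_iff by simp
    show "\<forall>i<n. Es i \<subseteq> Es (Suc i)" using Esq by blast
    show "\<forall>i<n. Es (Suc i) \<noteq> Es i \<longrightarrow> \<not> (\<exists>L. C.rsub UNIV actE L \<and> Es i \<subset> L \<and> L \<subset> Es (Suc i))"
      using Esq rsub_iff by simp
    show "{..<n} = {i. i < n \<and> Es (Suc i) \<noteq> Es i}"
    proof (rule set_eqI)
      fix i show "i \<in> {..<n} \<longleftrightarrow> i \<in> {i. i < n \<and> Es (Suc i) \<noteq> Es i}"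
        using Esq[of i] by auto
    qed
    show "inj_on id {..<n}" by simp
    show "\<forall>i\<in>{..<n}. (\<forall>x\<in>Es (Suc i). \<forall>y\<in>Es (Suc i). \<pi> i (x + y) = \<pi> i x + \<pi> i y) \<and>
         (\<forall>c. \<forall>x\<in>Es (Suc i). \<pi> i (sE c x) = sF c (\<pi> i x)) \<and>
         (\<forall>a. \<forall>x\<in>Es (Suc i). \<pi> i (actE a x) = actF a (\<pi> i x)) \<and>
         \<pi> i ` Es (Suc i) = Fs0 (id i) \<and> {x\<in>Es (Suc i). \<pi> i x = 0} = Es i"
      using \<pi> by simp
  qed
  obtain \<psi> where c0: "C.concl UNIV (id ` {..<n}) \<psi>" using C.main[OF good] by blast
  have c: "C.concl UNIV {..<n} \<psi>" using c0 by simp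
  note c1 = C.conclD1[OF c] and c2 = C.conclD2[OF c] and c3 = C.conclD3[OF c] and c4 = C.conclD4[OF c]
    and c5 = C.conclD5[OF c] and c6 = C.conclD6[OF c]
  have Fsm: "\<And>i. i < n \<Longrightarrow> submodule sF actF (Fs0 i)"
    using DS[unfolded internal_direct_sum_def, THEN conjunct1] by blast
  have Fsub: "\<And>i. i < n \<Longrightarrow> F.subspace (Fs0 i)" and Fact: "\<And>i a x. i < n \<Longrightarrow> x \<in> Fs0 i \<Longrightarrow> actF a x \<in> Fs0 i"
    using Fsm unfolding submodule_def by blast+
  have DSspan: "\<forall>x. \<exists>xs. (\<forall>i<n. xs i \<in> Fs0 i) \<and> x = (\<Sum>i<n. xs i)"
    using DS[unfolded internal_direct_sum_def, THEN conjunct2, THEN conjunct1] .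
  have DSind: "\<forall>xs. (\<forall>i<n. xs i \<in> Fs0 i) \<and> (\<Sum>i<n. xs i) = 0 \<longrightarrow> (\<forall>i<n. xs i = 0)"
    using DS[unfolded internal_direct_sum_def, THEN conjunct2, THEN conjunct2] .
  define dec where "dec x = (SOME xs. (\<forall>i<n. xs i \<in> Fs0 i) \<and> x = (\<Sum>i<n. xs i))" for x
  have dec0: "(\<forall>i<n. dec x i \<in> Fs0 i) \<and> x = (\<Sum>i<n. dec x i)" for x
  proof -
    have "\<exists>xs. (\<forall>i<n. xs i \<in> Fs0 i) \<and> x = (\<Sum>i<n. xs i)" using spec[OF DSspan, of x] .
    then show ?thesis unfolding dec_def by (rule someI_ex)
  qed
  have decm: "\<And>i. i < n \<Longrightarrow> dec x i \<in> Fs0 i" for x using dec0[of x] by blast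
  have decs: "(\<Sum>i<n. dec x i) = x" for x using dec0[of x] by (elim conjE) (rule sym)
  have dec_uniq: "dec x i = xs i" if xs: "\<forall>i<n. xs i \<in> Fs0 i" "(\<Sum>i<n. xs i) = x" and i: "i < n" for x xs i
  proof -
    have "(\<Sum>i<n. xs i - dec x i) = (\<Sum>i<n. xs i) - (\<Sum>i<n. dec x i)" by (simp add: sum_subtractf)
    also have "\<dots> = 0" using xs(2) decs[of x] by simp
    finally have s0: "(\<Sum>i<n. xs i - dec x i) = 0" .
    have m: "\<forall>i<n. xs i - dec x i \<in> Fs0 i"
    proof (intro allI impI)
      fix i assume i: "i < n"
      show "xs i - dec x i \<in> Fs0 i" using F.subspace_diff[OF Fsub[OF i]] xs(1) decm[OF i] i by blast
    qed
    have "\<forall>i<n. xs i - dec x i = 0" using DSind[rule_format, of "\<lambda>i. xs i - dec x i"] s0 m by blast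
    then show ?thesis using i by simp
  qed
  have dec_add: "dec (x + y) i = dec x i + dec y i" if "i < n" for x y i
  proof (rule dec_uniq[OF _ _ that])
    show "\<forall>i<n. dec x i + dec y i \<in> Fs0 i"
    proof (intro allI impI)
      fix i assume i: "i < n"
      show "dec x i + dec y i \<in> Fs0 i" using F.subspace_add[OF Fsub[OF i] decm[OF i] decm[OF i]] .
    qed
    show "(\<Sum>i<n. dec x i + dec y i) = x + y" by (simp add: sum.distrib decs)
  qed
  have dec_scale: "dec (sF c x) i = sF c (dec x i)" if "i < n" for c x i
  proof (rule dec_uniq[OF _ _ that])
    show "\<forall>i<n. sF c (dec x i) \<in> Fs0 i"
    proof (intro allI impI)
      fix i assume i: "i < n"
      show "sF c (dec x i) \<in> Fs0 i" using F.subspace_scale[OF Fsub[OF i] decm[OF i]] .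
    qed
    have "(\<Sum>i<n. sF c (dec x i)) = sF c (\<Sum>i<n. dec x i)" by (rule F.scale_sum_right[symmetric])
    then show "(\<Sum>i<n. sF c (dec x i)) = sF c x" by (simp add: decs)
  qed
  have actF0: "actF a 0 = 0" for a using actFadd[of a 0 0] by simp
  have actF_sum: "actF a (\<Sum>i\<in>A. f i) = (\<Sum>i\<in>A. actF a (f i))" for a f and A :: "nat set"
    by (induction A rule: infinite_finite_induct) (auto simp: actF0 actFadd)
  have dec_act: "dec (actF a x) i = actF a (dec x i)" if "i < n" for a x i
  proof (rule dec_uniq[OF _ _ that])
    show "\<forall>i<n. actF a (dec x i) \<in> Fs0 i"
    proof (intro allI impI)
      fix i assume i: "i < n"
      show "actF a (dec x i) \<in> Fs0 i" using Fact[OF i decm[OF i]] .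
    qed
    have "(\<Sum>i<n. actF a (dec x i)) = actF a (\<Sum>i<n. dec x i)" by (rule actF_sum[symmetric])
    then show "(\<Sum>i<n. actF a (dec x i)) = actF a x" by (simp add: decs)
  qed
  define \<phi> where "\<phi> x = (\<Sum>t<n. \<psi> t (dec x t))" for x
  have \<phi>_add: "\<phi> (x + y) = \<phi> x + \<phi> y" for x y
  proof -
    have "\<phi> (x + y) = (\<Sum>t<n. \<psi> t (dec x t) + \<psi> t (dec y t))"
      unfolding \<phi>_def using dec_add c2 decm by (intro sum.cong) auto
    then show ?thesis unfolding \<phi>_def by (simp add: sum.distrib)
  qed
  have \<phi>_scale: "\<phi> (sF c x) = sE c (\<phi> x)" for c x
  proof -
    have "\<phi> (sF c x) = (\<Sum>t<n. sE c (\<psi> t (dec x t)))"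
      unfolding \<phi>_def using dec_scale c3 decm by (intro sum.cong) auto
    then show ?thesis unfolding \<phi>_def by (simp add: C.E.scale_sum_right)
  qed
  have lin: "Vector_Spaces.linear sF sE \<phi>"
    unfolding Vector_Spaces.linear_iff using vsE vsF \<phi>_add \<phi>_scale by blast
  have \<phi>_diff: "\<phi> (x - y) = \<phi> x - \<phi> y" for x y
    using \<phi>_add[of "x - y" y] by simp
  have inj: "inj \<phi>"
  proof (rule injI)
    fix x y assume "\<phi> x = \<phi> y"
    then have "\<phi> (x - y) = 0" using \<phi>_diff by simp
    then have "(\<Sum>t<n. \<psi> t (dec (x - y) t)) = 0" unfolding \<phi>_def .
    then have "\<forall>t<n. dec (x - y) t = 0" using c5 decm by blast
    then have "x - y = 0" using decs[of "x - y"] by simp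
    then show "x = y" by simp
  qed
  have surj: "surj \<phi>"
  proof -
    have "\<exists>x. y = \<phi> x" for y
    proof -
      have "\<exists>xs. (\<forall>t\<in>{..<n}. xs t \<in> Fs0 t) \<and> y = (\<Sum>t<n. \<psi> t (xs t))" using c4 by blast
      then obtain xs where xs0: "\<forall>t\<in>{..<n}. xs t \<in> Fs0 t" "y = (\<Sum>t<n. \<psi> t (xs t))" by blast
      have xs: "\<forall>t<n. xs t \<in> Fs0 t" "y = (\<Sum>t<n. \<psi> t (xs t))" using xs0 by auto
      have "dec (\<Sum>t<n. xs t) t = xs t" if "t < n" for t using dec_uniq[OF xs(1) refl that] .
      then have "\<phi> (\<Sum>t<n. xs t) = (\<Sum>t<n. \<psi> t (xs t))" unfolding \<phi>_def by (intro sum.cong) auto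
      then show ?thesis using xs(2) by metis
    qed
    then show ?thesis unfolding surj_def by blast
  qed
  have compat: "b (\<phi> (actF a x)) (\<phi> y) = b (\<phi> x) (\<phi> (actF (invl a) y))" for a x y
  proof -
    have "b (\<phi> (actF a x)) (\<phi> y) = (\<Sum>t<n. \<Sum>s<n. b (\<psi> s (actF a (dec x s))) (\<psi> t (dec y t)))"
      unfolding \<phi>_def by (simp add: C.bsum1 C.bsum2 dec_act)
    also have "\<dots> = (\<Sum>t<n. \<Sum>s<n. b (\<psi> s (dec x s)) (\<psi> t (actF (invl a) (dec y t))))"
      using c6 decm by (intro sum.cong refl) auto
    also have "\<dots> = b (\<phi> x) (\<phi> (actF (invl a) y))"
      unfolding \<phi>_def by (simp add: C.bsum1 C.bsum2 dec_act)
    finally show ?thesis .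
  qed
  define b' where "b' x y = b (\<phi> x) (\<phi> y)" for x y
  show ?thesis
  proof (intro exI[of _ b'] conjI impI)
    show "bilinear_form sF b'" unfolding bilinear_form_def b'_def
      by (simp add: \<phi>_add \<phi>_scale C.badd1 C.badd2 C.bsc1 C.bsc2)
    show "symmetric_form b'" if "symmetric_form b" using that unfolding symmetric_form_def b'_def by simp
    show "alternating_form b'" if "alternating_form b" using that unfolding alternating_form_def b'_def by simp
    show "adjoint_compatible actF invl b'" unfolding adjoint_compatible_def b'_def using compat by simp
    show "iso_forms sF b' sE b" unfolding iso_forms_def b'_def using lin inj surj bij_def by blast
  qed
qed

end
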